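(* Consider the genus 3 setting described in the context (curve $y^2=x^7+p_4x^3+p_5x^2+p_6x+p_7$, Lax operator $L$ in Tyurin parametrization with gauge $\alpha_5=(1,0)^T$, $\alpha_6=(0,1)^T$, Hamiltonian $H$). Let $Z$ be the subvariety defined by $$\alpha_{11}=\alpha_{22}=\alpha_{13}=\alpha_{24}=0,\qquad \beta_1=\beta_2=\beta_3=\beta_4=0,\ \beta_{25}=\beta_{16}=0.$$ Then $Z$ is invariant under the Hamiltonian flow of $H$: at every point of $Z$ (where defined), $\partial H/\partial\beta_{11}=\partial H/\partial\beta_{22}=\partial H/\partial\beta_{13}=\partial H/\partial\beta_{24}=0$ and $\partial H/\partial\alpha_{ij}=0$ for all $i\in\{1,2\}$, $j\in\{1,2,3,4\}$. Moreover the restriction of $H$ to $Z$ equals $$G(a_1,a_3,a_6;\kappa_1,\kappa_3,\kappa_6)+G(a_2,a_4,a_5;\kappa_2,\kappa_4,\kappa_5),$$ where for pairwise distinct $u_1,u_2,u_3$ and $D=(u_1-u_2)(u_1-u_3)(u_2-u_3)$, $$G(u_1,u_2,u_3;k_1,k_2,k_3)=\frac{\big(u_3^2(k_2-k_1)+u_2^2(k_1-k_3)+u_1^2(k_3-k_2)\big)^2}{D^2}+\frac{2\big(u_3(k_2-k_1)+u_2(k_1-k_3)+u_1(k_3-k_2)\big)\big(u_3^2(u_1k_2-u_2k_1)+u_2^2(u_3k_1-u_1k_3)+u_1^2(u_2k_3-u_3k_2)\big)}{D^2}.$$ Thus the reduced dynamics of $(a_1,a_3,a_6,\kappa_1,\kappa_3,\kappa_6)$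 and of $(a_2,a_4,a_5,\kappa_2,\kappa_4,\kappa_5)$ are two independent canonical Hamiltonian systems.
   Context: Let $\Sigma$ be the genus 3 hyperelliptic curve $y^2=P(x)=x^7+p_4x^3+p_5x^2+p_6x+p_7$ (coefficients $p_1=p_2=p_3$ of $x^6,x^5,x^4$ equal to $0$). Dynamical variables: points $(a_s,b_s)\in\Sigma$, $s=1,\dots,6$, with pairwise distinct $a_s$ ($b_s$ a local branch of $\sqrt{P(a_s)}$, a function of $a_s$); numbers $\kappa_1,\dots,\kappa_6$; vectors $\alpha_j=(\alpha_{1j},\alpha_{2j})^T$, $\beta_j=(\beta_{1j},\beta_{2j})^T$ for $j=1,\dots,4$, $\beta_5=(0,\beta_{25})^T$, $\beta_6=(\beta_{16},0)^T$, and gauge-fixed $\alpha_5=(1,0)^T$, $\alpha_6=(0,1)^T$. The Lax operator is $$L(x,y)=A_0+A_1x+A_2x^2+\sum_{s=1}^6\alpha_s\beta_s^T\frac{y+b_s}{x-a_s},$$ where the $2\times2$ matrices $A_0,A_1,A_2$ are determined (rationally, for generic values) by the twelve scalar linear equations $L(a_s,b_s)\alpha_s=\kappa_s\alpha_s$, $s=1,\dots,6$, in which the singular summand with index $s$ is omitted from $L(a_s,b_s)$. Near $x=\infty$ use $x=z^{-2}$, $y=z^{-7}(1+p_4z^8+p_5z^{10}+p_6z^{12}+p_7z^{14})^{1/2}$ (branch equal to $1$ at $z=0$). The Hamiltonian (denoted $H_{2,4}$ in the paper) is $$H=\operatorname{res}_{z=0}\, z^{-4}\,y(z)^{-1}\,\operatorname{tr}\big(L(x(z),y(z))^2\big)\,dz.$$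 Hamiltonian equations: $\dot a_s=\partial H/\partial\kappa_s$, $\dot\kappa_s=-\partial H/\partial a_s$, $\dot\alpha_{ij}=\partial H/\partial\beta_{ij}$, $\dot\beta_{ij}=-\partial H/\partial\alpha_{ij}$ for $i\in\{1,2\}$, $j\in\{1,\dots,4\}$, and $\dot\beta_{25}=\dot\beta_{16}=0$ (conjugate variables fixed by the gauge). *)

theory Defs
  imports "HOL-Analysis.Analysis" "HOL-Computational_Algebra.Formal_Laurent_Series"
begin

text \<open>Indices: s,j \<in> {1..6} for points, i \<in> {1,2} for vector/matrix rows.
  alpha i j = \<alpha>_{ij} (i-th component of \<alpha>_j), beta i j = \<beta>_{ij}.
  The coefficient matrices A_0,A_1,A_2 are encoded as Am :: nat \<Rightarrow> nat \<Rightarrow> nat \<Rightarrow> complex,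
  Am k i j = (A_k)_{ij}, with Am k i j = 0 outside k \<le> 2, i,j \<in> {1,2}.\<close>

definition curveP :: "complex \<Rightarrow> complex \<Rightarrow> complex \<Rightarrow> complex \<Rightarrow> complex \<Rightarrow> complex" where
  "curveP p4 p5 p6 p7 x = x^7 + p4 * x^3 + p5 * x^2 + p6 * x + p7"

text \<open>The twelve scalar equations L(a_s,b_s) \<alpha>_s = \<kappa>_s \<alpha>_s (s-th singular summand omitted),
  together with the normalisation that Am vanishes outside the relevant index range.\<close>
definition lax_eqs ::
  "(nat \<Rightarrow> complex) \<Rightarrow> (nat \<Rightarrow> complex) \<Rightarrow> (nat \<Rightarrow> complex) \<Rightarrow>
   (nat \<Rightarrow> nat \<Rightarrow> complex) \<Rightarrow> (nat \<Rightarrow> nat \<Rightarrow> complex) \<Rightarrow>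
   (nat \<Rightarrow> nat \<Rightarrow> nat \<Rightarrow> complex) \<Rightarrow> bool" where
  "lax_eqs a b \<kappa> \<alpha> \<beta> Am \<longleftrightarrow>
     (\<forall>k i j. (k > 2 \<or> i \<notin> {1,2} \<or> j \<notin> {1,2}) \<longrightarrow> Am k i j = 0) \<and>
     (\<forall>s\<in>{1..6}. \<forall>i\<in>{1,2::nat}.
        (\<Sum>j\<in>{1,2}. ((\<Sum>k\<le>2. Am k i j * a s ^ k)
            + (\<Sum>r\<in>{1..6} - {s}. \<alpha> i r * \<beta> j r * (b s + b r) / (a s - a r))) * \<alpha> j s)
        = \<kappa> s * \<alpha> i s)"

definition lax_defined where
  "lax_defined a b \<kappa> \<alpha> \<beta> \<longleftrightarrow> (\<exists>!Am. lax_eqs a b \<kappa> \<alpha> \<beta> Am)"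

definition lax_A where
  "lax_A a b \<kappa> \<alpha> \<beta> = (THE Am. lax_eqs a b \<kappa> \<alpha> \<beta> Am)"

text \<open>Local parameter at infinity: x = z^{-2}, y = z^{-7} (1+p4 z^8+p5 z^10+p6 z^12+p7 z^14)^{1/2}.\<close>
definition xz :: "complex fls" where
  "xz = fls_X_inv ^ 2"

definition sqrt_ser :: "complex \<Rightarrow> complex \<Rightarrow> complex \<Rightarrow> complex \<Rightarrow> complex fps" where
  "sqrt_ser p4 p5 p6 p7 =
     (THE s. s ^ 2 = 1 + fps_const p4 * fps_X ^ 8 + fps_const p5 * fps_X ^ 10
                       + fps_const p6 * fps_X ^ 12 + fps_const p7 * fps_X ^ 14
             \<and> s $ 0 = 1)"

definition yz :: "complex \<Rightarrow> complex \<Rightarrow> complex \<Rightarrow> complex \<Rightarrow> complex fls" where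
  "yz p4 p5 p6 p7 = fls_X_inv ^ 7 * fps_to_fls (sqrt_ser p4 p5 p6 p7)"

definition Lz where
  "Lz p4 p5 p6 p7 a b \<kappa> \<alpha> \<beta> i j =
     (\<Sum>k\<le>2. fls_const (lax_A a b \<kappa> \<alpha> \<beta> k i j) * xz ^ k)
     + (\<Sum>s\<in>{1..6}. fls_const (\<alpha> i s * \<beta> j s) * (yz p4 p5 p6 p7 + fls_const (b s))
                      * inverse (xz - fls_const (a s)))"

definition Ham where
  "Ham p4 p5 p6 p7 a b \<kappa> \<alpha> \<beta> =
     fls_residue (fls_X_inv ^ 4 * inverse (yz p4 p5 p6 p7) *
        (\<Sum>i\<in>{1,2::nat}. \<Sum>j\<in>{1,2::nat}.
            Lz p4 p5 p6 p7 a b \<kappa> \<alpha> \<beta> i j * Lz p4 p5 p6 p7 a b \<kappa> \<alpha> \<beta> j i))"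

definition Gfun :: "complex \<Rightarrow> complex \<Rightarrow> complex \<Rightarrow> complex \<Rightarrow> complex \<Rightarrow> complex \<Rightarrow> complex" where
  "Gfun u1 u2 u3 k1 k2 k3 =
     (let D = (u1 - u2) * (u1 - u3) * (u2 - u3) in
      (u3^2 * (k2 - k1) + u2^2 * (k1 - k3) + u1^2 * (k3 - k2))^2 / D^2
      + 2 * (u3 * (k2 - k1) + u2 * (k1 - k3) + u1 * (k3 - k2))
          * (u3^2 * (u1 * k2 - u2 * k1) + u2^2 * (u3 * k1 - u1 * k3) + u1^2 * (u2 * k3 - u3 * k2))
          / D^2)"

end

theory Submission
  imports Defs
begin


definition Pser :: "complex \<Rightarrow> complex \<Rightarrow> complex \<Rightarrow> complex \<Rightarrow> complex fps" where
  "Pser p4 p5 p6 p7 = 1 + fps_const p4 * fps_X ^ 8 + fps_const p5 * fps_X ^ 10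
                       + fps_const p6 * fps_X ^ 12 + fps_const p7 * fps_X ^ 14"

lemma Pser_nth: "Pser p4 p5 p6 p7 $ n = (if n = 0 then 1 else if n < 8 then 0 else Pser p4 p5 p6 p7 $ n)"
  by (auto simp: Pser_def)

lemma Pser_0: "Pser p4 p5 p6 p7 $ 0 = 1" by (simp add: Pser_def)
lemma Pser_small: "0 < n \<Longrightarrow> n < 8 \<Longrightarrow> Pser p4 p5 p6 p7 $ n = 0" by (simp add: Pser_def)

lemma sqrt_ser_ex: "\<exists>!s. s ^ 2 = Pser p4 p5 p6 p7 \<and> s $ 0 = (1::complex)"
proof -
  let ?a = "Pser p4 p5 p6 p7"
  let ?r = "fps_radical (\<lambda>_ _. 1::complex) (Suc 1) ?a"
  have "?r ^ Suc 1 = ?a"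
    using power_radical[of ?a "\<lambda>_ _. 1" 1] by (simp add: Pser_0)
  moreover have "?r $ 0 = 1" by simp
  ultimately have ex: "?r ^ 2 = ?a \<and> ?r $ 0 = 1" by (simp add: numeral_2_eq_2)
  show ?thesis
  proof (rule ex1I[of _ ?r])
    show "?r ^ 2 = ?a \<and> ?r $ 0 = 1" by (rule ex)
    fix t assume t: "t ^ 2 = ?a \<and> t $ 0 = 1"
    have "(t - ?r) * (t + ?r) = t^2 - ?r^2" by (simp add: algebra_simps power2_eq_square)
    also have "\<dots> = 0" using t ex by simp
    finally have "(t - ?r) * (t + ?r) = 0" .
    moreover have "(t + ?r) $ 0 \<noteq> 0" using t ex by simp
    hence "t + ?r \<noteq> 0" by (metis fps_zero_nth)
    ultimately show "t = ?r" by simp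
  qed
qed

lemma sqrt_ser_props: "sqrt_ser p4 p5 p6 p7 ^ 2 = Pser p4 p5 p6 p7 \<and> sqrt_ser p4 p5 p6 p7 $ 0 = 1"
  unfolding sqrt_ser_def Pser_def[symmetric] by (rule theI'[OF sqrt_ser_ex])

lemma aux_ring: "(a::complex)*b + (x + b*a) = 2*a*b + x" by (simp add: algebra_simps)

lemma sq_nth: fixes s :: "complex fps" shows "n \<ge> 1 \<Longrightarrow> (s * s) $ n = 2 * s$0 * s$n + (\<Sum>i=1..n-1. s$i * s$(n-i))"
proof -
  assume n: "n \<ge> 1"
  then obtain m where m: "n = Suc m" by (cases n) auto
  have e1: "(s * s) $ Suc m = (\<Sum>i=0..Suc m. s $ i * s $ (Suc m - i))" by (simp add: fps_mult_nth m)
  have e2: "(\<Sum>i=0..Suc m. s $ i * s $ (Suc m - i)) = s$0 * s$(Suc m) + (\<Sum>i=Suc 0..Suc m. s$i * s$(Suc m - i))"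
    by (simp add: sum.atLeast_Suc_atMost)
  have e3: "(\<Sum>i=Suc 0..Suc m. s$i * s$(Suc m - i)) = (\<Sum>i=Suc 0..m. s$i * s$(Suc m - i)) + s$(Suc m) * s$0"
    by (simp only: sum.cl_ivl_Suc) simp
  have e4: "(\<Sum>i=1..Suc m - 1. s$i * s$(Suc m - i)) = (\<Sum>i=Suc 0..m. s$i * s$(Suc m - i))" by simp
  show ?thesis unfolding m e1 e2 e3 e4 by (rule aux_ring)
qed

lemma sqrt_small: assumes "0 < n" "n < 8" shows "sqrt_ser p4 p5 p6 p7 $ n = 0"
  using assms
proof (induction n rule: less_induct)
  case (less n)
  let ?s = "sqrt_ser p4 p5 p6 p7"
  have "(\<Sum>i=1..n-1. ?s $ i * ?s $ (n-i)) = 0"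
  proof (rule sum.neutral, rule ballI)
    fix i assume i: "i \<in> {1..n-1}"
    hence "?s $ i = 0" using less.IH[of i] less.prems by auto
    thus "?s $ i * ?s $ (n-i) = 0" by simp
  qed
  moreover have "(?s * ?s) $ n = 0"
    using sqrt_ser_props[of p4 p5 p6 p7] Pser_small[OF less.prems] by (simp add: power2_eq_square)
  ultimately have "2 * ?s $ 0 * ?s $ n = 0" using sq_nth[of n ?s] less.prems by simp
  thus ?case using sqrt_ser_props[of p4 p5 p6 p7] by simp
qed

lemma inv_sqrt_small: assumes "0 < n" "n < 8" shows "inverse (sqrt_ser p4 p5 p6 p7) $ n = 0"
proof -
  let ?s = "sqrt_ser p4 p5 p6 p7"
  let ?u = "inverse ?s"
  have s0: "?s $ 0 = 1" using sqrt_ser_props by blast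
  have one: "?u * ?s = 1" using s0 inverse_mult_eq_1[of ?s] by simp
  obtain m where m: "n = Suc m" using assms by (cases n) auto
  have e1: "(?u * ?s) $ Suc m = (\<Sum>i=0..Suc m. ?u $ i * ?s $ (Suc m - i))" by (simp add: fps_mult_nth)
  have e2: "(\<Sum>i=0..Suc m. ?u $ i * ?s $ (Suc m - i)) = (\<Sum>i=0..m. ?u $ i * ?s $ (Suc m - i)) + ?u $ Suc m * ?s $ 0"
    by (simp only: sum.cl_ivl_Suc) simp
  have e3: "(\<Sum>i=0..m. ?u $ i * ?s $ (Suc m - i)) = 0"
  proof (rule sum.neutral, rule ballI)
    fix i assume "i \<in> {0..m}"
    hence "?s $ (Suc m - i) = 0" using assms m by (intro sqrt_small) auto
    thus "?u $ i * ?s $ (Suc m - i) = 0" by simp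
  qed
  have "(?u * ?s) $ Suc m = 0" using one by simp
  hence "?u $ Suc m * ?s $ 0 = 0" unfolding e1 e2 e3 by simp
  thus ?thesis using s0 m by simp
qed

lemma inv_sqrt_0: "inverse (sqrt_ser p4 p5 p6 p7) $ 0 = 1"
  using sqrt_ser_props[of p4 p5 p6 p7] by simp


definition Spol :: "(nat \<Rightarrow> complex) \<Rightarrow> complex fls" where
  "Spol c = (\<Sum>k\<le>2. fls_const (c k) * xz ^ k)"

lemma inverse_yz: "inverse (yz p4 p5 p6 p7) = fls_X ^ 7 * fps_to_fls (inverse (sqrt_ser p4 p5 p6 p7))"
proof -
  have s0: "sqrt_ser p4 p5 p6 p7 $ 0 = 1" using sqrt_ser_props by blast
  hence sd: "subdegree (sqrt_ser p4 p5 p6 p7) = 0" by (simp add: subdegree_eq_0)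
  show ?thesis unfolding yz_def
    by (simp add: fls_inverse_X_inv_power fls_inverse_fps_to_fls[OF sd])
qed

lemma res_term: fixes G :: "complex fls"
  shows "fls_nth (fls_X_inv ^ 4 * (fls_X ^ 7 * G) * (fls_const d * fls_X_inv ^ m)) (-1) = d * (fls_nth G (int m - 4))"
proof -
  have "fls_X_inv ^ 4 * (fls_X ^ 7 * G) * (fls_const d * fls_X_inv ^ m)
        = fls_const d * (fls_X_inv ^ 4 * (fls_X_inv ^ m * (fls_X ^ 7 * G)))" by (simp only: ac_simps)
  also have "\<dots> = fls_const d * fls_shift (int 4) (fls_shift (int m) (fls_shift (- int 7) G))"
    by (simp only: fls_X_inv_power_times_conv_shift(1) fls_X_power_times_conv_shift(1))
  finally have eq: "fls_X_inv ^ 4 * (fls_X ^ 7 * G) * (fls_const d * fls_X_inv ^ m) = fls_const d * fls_shift (int 4) (fls_shift (int m) (fls_shift (- int 7) G))" .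
  have "-1 + int 4 + int m + - int 7 = int m - 4" by simp
  thus ?thesis unfolding eq fls_mult_const_nth fls_shift_nth by (simp add: algebra_simps)
qed

lemma res_Spol_gen: fixes G :: "complex fls"
  shows "fls_nth (fls_X_inv ^ 4 * (fls_X ^ 7 * G) * (Spol c * Spol c)) (-1)
     = (\<Sum>k\<le>2. \<Sum>l\<le>2. c k * c l * fls_nth G (int (2*k+2*l) - 4))"
proof -
  have e: "\<And>k l. fls_const (c k) * xz ^ k * (fls_const (c l) * xz ^ l) = fls_const (c k * c l) * fls_X_inv ^ (2*k+2*l)"
    by (simp add: xz_def power_mult[symmetric] power_add ac_simps flip: fls_const_mult_const)
  have "fls_X_inv ^ 4 * (fls_X ^ 7 * G) * (Spol c * Spol c)
     = (\<Sum>k\<le>2. \<Sum>l\<le>2. fls_X_inv ^ 4 * (fls_X ^ 7 * G) * (fls_const (c k * c l) * fls_X_inv ^ (2*k+2*l)))"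
    unfolding Spol_def sum_product unfolding e unfolding sum_distrib_left by (rule refl)
  thus ?thesis by (simp add: fls_nth_sum res_term)
qed

lemma res_Spol: "fls_residue (fls_X_inv ^ 4 * inverse (yz p4 p5 p6 p7) * (Spol c * Spol c))
   = 2 * c 0 * c 2 + c 1 ^ 2"
proof -
  let ?u = "inverse (sqrt_ser p4 p5 p6 p7)"
  have "fls_residue (fls_X_inv ^ 4 * inverse (yz p4 p5 p6 p7) * (Spol c * Spol c))
      = (\<Sum>k\<le>2. \<Sum>l\<le>2. c k * c l * fls_nth (fps_to_fls ?u) (int (2*k+2*l) - 4))"
    unfolding inverse_yz fls_residue_def by (rule res_Spol_gen)
  also have "\<dots> = 2 * c 0 * c 2 + c 1 ^ 2"
    using inv_sqrt_small[of 2 p4 p5 p6 p7] inv_sqrt_small[of 4 p4 p5 p6 p7] inv_sqrt_0[of p4 p5 p6 p7]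
    by (simp add: numeral_2_eq_2 power2_eq_square algebra_simps)
  finally show ?thesis .
qed




definition ev :: "(nat \<Rightarrow> complex) \<Rightarrow> complex \<Rightarrow> complex" where
  "ev c x = (\<Sum>k\<le>2. c k * x ^ k)"

lemma ev_expand: "ev c x = c 0 + c 1 * x + c 2 * x^2"
  by (simp add: ev_def numeral_2_eq_2)

definition interp :: "complex \<Rightarrow> complex \<Rightarrow> complex \<Rightarrow> complex \<Rightarrow> complex \<Rightarrow> complex \<Rightarrow> nat \<Rightarrow> complex" where
  "interp u1 u2 u3 v1 v2 v3 k =
    (let d1 = (u1 - u2) * (u1 - u3); d2 = (u2 - u1) * (u2 - u3); d3 = (u3 - u1) * (u3 - u2) in
     if k = 0 then v1 * u2 * u3 / d1 + v2 * u1 * u3 / d2 + v3 * u1 * u2 / d3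
     else if k = 1 then - (v1 * (u2 + u3) / d1 + v2 * (u1 + u3) / d2 + v3 * (u1 + u2) / d3)
     else if k = 2 then v1 / d1 + v2 / d2 + v3 / d3 else 0)"

lemma ev_interp: "ev (interp u1 u2 u3 v1 v2 v3) x =
   v1 * ((x - u2) * (x - u3)) / ((u1 - u2) * (u1 - u3)) + v2 * ((x - u1) * (x - u3)) / ((u2 - u1) * (u2 - u3))
   + v3 * ((x - u1) * (x - u2)) / ((u3 - u1) * (u3 - u2))"
  by (simp add: ev_expand interp_def Let_def add_divide_distrib diff_divide_distrib power2_eq_square algebra_simps)

lemma interp_eval:
  assumes "u1 \<noteq> u2" "u1 \<noteq> u3" "u2 \<noteq> u3"
  shows "ev (interp u1 u2 u3 v1 v2 v3) u1 = v1" "ev (interp u1 u2 u3 v1 v2 v3) u2 = v2"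
        "ev (interp u1 u2 u3 v1 v2 v3) u3 = v3"
  using assms by (simp_all add: ev_interp)

lemma quad_zero:
  assumes "u1 \<noteq> u2" "u1 \<noteq> u3" "u2 \<noteq> u3" "ev c u1 = 0" "ev c u2 = 0" "ev c u3 = 0"
  shows "c 0 = 0 \<and> c 1 = 0 \<and> c 2 = 0"
proof -
  have d: "\<And>x y. ev c x - ev c y = (x - y) * (c 1 + c 2 * (x + y))"
    by (simp add: ev_expand power2_eq_square algebra_simps)
  have e12: "c 1 + c 2 * (u1 + u2) = 0" using d[of u1 u2] assms by simp
  have e13: "c 1 + c 2 * (u1 + u3) = 0" using d[of u1 u3] assms by simp
  have "c 2 * (u2 - u3) = (c 1 + c 2 * (u1 + u2)) - (c 1 + c 2 * (u1 + u3))" by (simp add: algebra_simps)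
  also have "\<dots> = 0" by (simp only: e12 e13) simp
  finally have "c 2 * (u2 - u3) = 0" .
  hence c2: "c 2 = 0" using assms by simp
  hence c1: "c 1 = 0" using e12 by simp
  have "c 0 = 0" using assms(4) c1 c2 by (simp add: ev_expand)
  thus ?thesis using c1 c2 by simp
qed

lemma ev_diff: "ev (\<lambda>k. c k - d k) x = ev c x - ev d x"
  by (simp add: ev_expand algebra_simps)

lemma interp_unique:
  assumes "u1 \<noteq> u2" "u1 \<noteq> u3" "u2 \<noteq> u3" "ev c u1 = v1" "ev c u2 = v2" "ev c u3 = v3"
  shows "\<forall>k\<le>2. c k = interp u1 u2 u3 v1 v2 v3 k"
proof -
  let ?d = "\<lambda>k. c k - interp u1 u2 u3 v1 v2 v3 k"
  have "?d 0 = 0 \<and> ?d 1 = 0 \<and> ?d 2 = 0"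
    by (rule quad_zero[OF assms(1-3)]) (use assms interp_eval[OF assms(1-3)] in \<open>simp_all add: ev_diff\<close>)
  thus ?thesis by (auto simp: le_Suc_eq numeral_2_eq_2)
qed

lemma ev_cong: "\<forall>k\<le>2. c k = d k \<Longrightarrow> ev c x = ev d x"
  by (simp add: ev_def)

lemma interp_swap12: "interp u1 u2 u3 v1 v2 v3 = interp u2 u1 u3 v2 v1 v3"
  by (rule ext) (simp add: interp_def Let_def algebra_simps)

lemma interp_zero: "interp u1 u2 u3 0 0 0 = (\<lambda>k. 0)"
  by (rule ext) (simp add: interp_def Let_def)

lemma interp_G: assumes "u1 \<noteq> u2" "u1 \<noteq> u3" "u2 \<noteq> u3"
  shows "2 * interp u1 u2 u3 k1 k2 k3 0 * interp u1 u2 u3 k1 k2 k3 2 + (interp u1 u2 u3 k1 k2 k3 1)^2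
     = Gfun u1 u2 u3 k1 k2 k3"
proof -
  have a: "u1 - u2 \<noteq> 0" "u1 - u3 \<noteq> 0" "u2 - u3 \<noteq> 0" "u2 - u1 \<noteq> 0" "u3 - u1 \<noteq> 0" "u3 - u2 \<noteq> 0"
    using assms by auto
  define D where "D = (u1 - u2) * (u1 - u3) * (u2 - u3)"
  have D: "D \<noteq> 0" using a by (simp add: D_def)
  define A where "A = u3 * (k2 - k1) + u2 * (k1 - k3) + u1 * (k3 - k2)"
  define B where "B = u3^2 * (k2 - k1) + u2^2 * (k1 - k3) + u1^2 * (k3 - k2)"
  define C where "C = u3^2 * (u1 * k2 - u2 * k1) + u2^2 * (u3 * k1 - u1 * k3) + u1^2 * (u2 * k3 - u3 * k2)"
  have r1: "\<And>x. x / ((u1 - u2) * (u1 - u3)) = x * (u2 - u3) / D"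
  proof -
    fix x
    have nz: "(u1 - u2) * (u1 - u3) \<noteq> 0" using a by simp
    show "x / ((u1 - u2) * (u1 - u3)) = x * (u2 - u3) / D"
      by (rule frac_eq_eq[OF nz D, THEN iffD2]) (simp add: D_def algebra_simps)
  qed
  have r2: "\<And>x. x / ((u2 - u1) * (u2 - u3)) = - x * (u1 - u3) / D"
  proof -
    fix x
    have nz: "(u2 - u1) * (u2 - u3) \<noteq> 0" using a by simp
    show "x / ((u2 - u1) * (u2 - u3)) = - x * (u1 - u3) / D"
      by (rule frac_eq_eq[OF nz D, THEN iffD2]) (simp add: D_def algebra_simps)
  qed
  have r3: "\<And>x. x / ((u3 - u1) * (u3 - u2)) = x * (u1 - u2) / D"
  proof -
    fix x
    have nz: "(u3 - u1) * (u3 - u2) \<noteq> 0" using a by simp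
    show "x / ((u3 - u1) * (u3 - u2)) = x * (u1 - u2) / D"
      by (rule frac_eq_eq[OF nz D, THEN iffD2]) (simp add: D_def algebra_simps)
  qed
  have i2: "interp u1 u2 u3 k1 k2 k3 2 = A / D"
    unfolding interp_def Let_def r1 r2 r3 using D by (simp add: A_def field_simps)
  have i1: "interp u1 u2 u3 k1 k2 k3 1 = - B / D"
    unfolding interp_def Let_def r1 r2 r3 using D by (simp add: B_def field_simps) (simp add: algebra_simps power2_eq_square)
  have i0: "interp u1 u2 u3 k1 k2 k3 0 = C / D"
    unfolding interp_def Let_def r1 r2 r3 using D by (simp add: C_def field_simps) (simp add: algebra_simps power2_eq_square)
  have G: "Gfun u1 u2 u3 k1 k2 k3 = B^2 / D^2 + 2 * A * C / D^2"
    by (simp add: Gfun_def Let_def A_def B_def C_def D_def)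
  show ?thesis unfolding i0 i1 i2 G using D by (simp add: field_simps power2_eq_square)
qed




definition FA where
  "FA a x R p q r = interp (a p) (a q) (a r) (R p / x p) (R q / x q) (R r / x r)"
definition GA where
  "GA a x y R p q r m u v = interp (a m) (a u) (a v)
      ((R m - ev (FA a x R p q r) (a m) * x m) / y m) (R u / y u) (R v / y v)"

lemma row_A:
  fixes a x y R f g :: "nat \<Rightarrow> complex"
  assumes dist: "distinct [a p, a q, a r]" "distinct [a m, a u, a v]"
    and y0: "y p = 0" "y q = 0" "y r = 0" and xn: "x p \<noteq> 0" "x q \<noteq> 0" "x r \<noteq> 0"
    and x0: "x u = 0" "x v = 0" and yn: "y u \<noteq> 0" "y v \<noteq> 0" "y m \<noteq> 0"
  shows "(\<forall>s\<in>{p,q,r,m,u,v}. ev f (a s) * x s + ev g (a s) * y s = R s) \<longleftrightarrow>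
         (\<forall>k\<le>2. f k = FA a x R p q r k) \<and> (\<forall>k\<le>2. g k = GA a x y R p q r m u v k)"
proof
  assume eqs: "\<forall>s\<in>{p,q,r,m,u,v}. ev f (a s) * x s + ev g (a s) * y s = R s"
  have fp: "ev f (a p) = R p / x p" "ev f (a q) = R q / x q" "ev f (a r) = R r / x r"
    using eqs y0 xn by (auto simp: field_simps)
  have F: "\<forall>k\<le>2. f k = FA a x R p q r k"
    unfolding FA_def by (rule interp_unique) (use dist fp in auto)
  have "ev f (a m) = ev (FA a x R p q r) (a m)" by (rule ev_cong[OF F])
  hence gp: "ev g (a m) = (R m - ev (FA a x R p q r) (a m) * x m) / y m"
    "ev g (a u) = R u / y u" "ev g (a v) = R v / y v"
    using eqs x0 yn by (auto simp: field_simps)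
  have G: "\<forall>k\<le>2. g k = GA a x y R p q r m u v k"
    unfolding GA_def by (rule interp_unique) (use dist gp in auto)
  show "(\<forall>k\<le>2. f k = FA a x R p q r k) \<and> (\<forall>k\<le>2. g k = GA a x y R p q r m u v k)" using F G by simp
next
  assume FG: "(\<forall>k\<le>2. f k = FA a x R p q r k) \<and> (\<forall>k\<le>2. g k = GA a x y R p q r m u v k)"
  have ef: "\<And>z. ev f z = ev (FA a x R p q r) z" by (rule ev_cong) (use FG in auto)
  have eg: "\<And>z. ev g z = ev (GA a x y R p q r m u v) z" by (rule ev_cong) (use FG in auto)
  have dA: "a p \<noteq> a q" "a p \<noteq> a r" "a q \<noteq> a r" "a m \<noteq> a u" "a m \<noteq> a v" "a u \<noteq> a v" using dist by auto
  note iF = interp_eval[OF dA(1-3)] and iG = interp_eval[OF dA(4-6)]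
  show "\<forall>s\<in>{p,q,r,m,u,v}. ev f (a s) * x s + ev g (a s) * y s = R s"
    unfolding ef eg FA_def GA_def using iF iG xn yn x0 y0 by (auto simp: FA_def)
qed




definition Sg :: "(nat \<Rightarrow> complex) \<Rightarrow> (nat \<Rightarrow> complex) \<Rightarrow> (nat \<Rightarrow> nat \<Rightarrow> complex) \<Rightarrow> (nat \<Rightarrow> nat \<Rightarrow> complex) \<Rightarrow> nat \<Rightarrow> nat \<Rightarrow> nat \<Rightarrow> complex" where
  "Sg a b \<alpha> \<beta> i j s = (\<Sum>r\<in>{1..6} - {s}. \<alpha> i r * \<beta> j r * (b s + b r) / (a s - a r))"
definition Rv :: "(nat \<Rightarrow> complex) \<Rightarrow> (nat \<Rightarrow> complex) \<Rightarrow> (nat \<Rightarrow> complex) \<Rightarrow> (nat \<Rightarrow> nat \<Rightarrow> complex) \<Rightarrow> (nat \<Rightarrow> nat \<Rightarrow> complex) \<Rightarrow> nat \<Rightarrow> nat \<Rightarrow> complex" where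
  "Rv a b \<kappa> \<alpha> \<beta> i s = \<kappa> s * \<alpha> i s - (Sg a b \<alpha> \<beta> i 1 s * \<alpha> 1 s + Sg a b \<alpha> \<beta> i 2 s * \<alpha> 2 s)"

lemma lax_eqs_iff: "lax_eqs a b \<kappa> \<alpha> \<beta> Am \<longleftrightarrow>
   (\<forall>k i j. (k > 2 \<or> i \<notin> {1,2} \<or> j \<notin> {1,2}) \<longrightarrow> Am k i j = 0) \<and>
   (\<forall>s\<in>{1..6}. \<forall>i\<in>{1,2::nat}. ev (\<lambda>k. Am k i 1) (a s) * \<alpha> 1 s + ev (\<lambda>k. Am k i 2) (a s) * \<alpha> 2 s
       = Rv a b \<kappa> \<alpha> \<beta> i s)"
proof -
  have pt: "((\<Sum>j\<in>{1,2}. ((\<Sum>k\<le>2. Am k i j * a s ^ k)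
            + (\<Sum>r\<in>{1..6} - {s}. \<alpha> i r * \<beta> j r * (b s + b r) / (a s - a r))) * \<alpha> j s)
        = \<kappa> s * \<alpha> i s) \<longleftrightarrow>
      (ev (\<lambda>k. Am k i 1) (a s) * \<alpha> 1 s + ev (\<lambda>k. Am k i 2) (a s) * \<alpha> 2 s = Rv a b \<kappa> \<alpha> \<beta> i s)" for s i
  proof -
    have "(\<Sum>j\<in>{1,2::nat}. ((\<Sum>k\<le>2. Am k i j * a s ^ k)
            + (\<Sum>r\<in>{1..6} - {s}. \<alpha> i r * \<beta> j r * (b s + b r) / (a s - a r))) * \<alpha> j s)
       = (ev (\<lambda>k. Am k i 1) (a s) + Sg a b \<alpha> \<beta> i 1 s) * \<alpha> 1 s + (ev (\<lambda>k. Am k i 2) (a s) + Sg a b \<alpha> \<beta> i 2 s) * \<alpha> 2 s"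
      by (simp add: ev_def Sg_def)
    thus ?thesis unfolding Rv_def by (auto simp: algebra_simps)
  qed
  show ?thesis unfolding lax_eqs_def pt ..
qed

definition SolA where
  "SolA a b \<kappa> \<alpha> \<beta> p q r m u v k i j =
     (if k \<le> 2 \<and> i \<in> {1,2} then
        (if j = 1 then FA a (\<alpha> 1) (Rv a b \<kappa> \<alpha> \<beta> i) p q r k
         else if j = 2 then GA a (\<alpha> 1) (\<alpha> 2) (Rv a b \<kappa> \<alpha> \<beta> i) p q r m u v k else 0)
      else 0)"

lemma structA:
  fixes a b \<kappa> :: "nat \<Rightarrow> complex" and \<alpha> \<beta> :: "nat \<Rightarrow> nat \<Rightarrow> complex"
  assumes S: "{p,q,r,m,u,v} = {1..6::nat}"
    and dist: "distinct [a p, a q, a r]" "distinct [a m, a u, a v]"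
    and y0: "\<alpha> 2 p = 0" "\<alpha> 2 q = 0" "\<alpha> 2 r = 0" and xn: "\<alpha> 1 p \<noteq> 0" "\<alpha> 1 q \<noteq> 0" "\<alpha> 1 r \<noteq> 0"
    and x0: "\<alpha> 1 u = 0" "\<alpha> 1 v = 0" and yn: "\<alpha> 2 u \<noteq> 0" "\<alpha> 2 v \<noteq> 0" "\<alpha> 2 m \<noteq> 0"
  shows "lax_defined a b \<kappa> \<alpha> \<beta> \<and> lax_A a b \<kappa> \<alpha> \<beta> = SolA a b \<kappa> \<alpha> \<beta> p q r m u v"
proof -
  note rowA = row_A[of a p q r m u v "\<alpha> 2" "\<alpha> 1", OF dist y0 xn x0 yn]
  have iff: "lax_eqs a b \<kappa> \<alpha> \<beta> Am \<longleftrightarrow>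
      (\<forall>k i j. (k > 2 \<or> i \<notin> {1,2} \<or> j \<notin> {1,2}) \<longrightarrow> Am k i j = 0) \<and>
      (\<forall>i\<in>{1,2::nat}. (\<forall>k\<le>2. Am k i 1 = FA a (\<alpha> 1) (Rv a b \<kappa> \<alpha> \<beta> i) p q r k) \<and>
          (\<forall>k\<le>2. Am k i 2 = GA a (\<alpha> 1) (\<alpha> 2) (Rv a b \<kappa> \<alpha> \<beta> i) p q r m u v k))" for Am
  proof -
    have sw: "(\<forall>s\<in>{1..6}. \<forall>i\<in>{1,2::nat}. ev (\<lambda>k. Am k i 1) (a s) * \<alpha> 1 s + ev (\<lambda>k. Am k i 2) (a s) * \<alpha> 2 s
       = Rv a b \<kappa> \<alpha> \<beta> i s) \<longleftrightarrow> (\<forall>i\<in>{1,2::nat}. \<forall>s\<in>{p,q,r,m,u,v}. ev (\<lambda>k. Am k i 1) (a s) * \<alpha> 1 s + ev (\<lambda>k. Am k i 2) (a s) * \<alpha> 2 s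
       = Rv a b \<kappa> \<alpha> \<beta> i s)" unfolding S by blast
    have rw: "(\<forall>s\<in>{p,q,r,m,u,v}. ev (\<lambda>k. Am k i 1) (a s) * \<alpha> 1 s + ev (\<lambda>k. Am k i 2) (a s) * \<alpha> 2 s
       = Rv a b \<kappa> \<alpha> \<beta> i s) \<longleftrightarrow> (\<forall>k\<le>2. Am k i 1 = FA a (\<alpha> 1) (Rv a b \<kappa> \<alpha> \<beta> i) p q r k) \<and>
          (\<forall>k\<le>2. Am k i 2 = GA a (\<alpha> 1) (\<alpha> 2) (Rv a b \<kappa> \<alpha> \<beta> i) p q r m u v k)" for i
      by (rule rowA)
    show ?thesis unfolding lax_eqs_iff sw rw ..
  qed
  let ?A = "SolA a b \<kappa> \<alpha> \<beta> p q r m u v"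
  have sol: "lax_eqs a b \<kappa> \<alpha> \<beta> ?A" unfolding iff by (auto simp: SolA_def)
  have uniq: "Am = ?A" if "lax_eqs a b \<kappa> \<alpha> \<beta> Am" for Am
  proof (intro ext)
    fix k i j
    show "Am k i j = ?A k i j"
      using that unfolding iff by (cases "k > 2 \<or> i \<notin> {1,2} \<or> j \<notin> {1,2}") (auto simp: SolA_def)
  qed
  have ex: "\<exists>!Am. lax_eqs a b \<kappa> \<alpha> \<beta> Am" using sol uniq by blast
  have "lax_A a b \<kappa> \<alpha> \<beta> = ?A" unfolding lax_A_def by (rule the_equality[where P="lax_eqs a b \<kappa> \<alpha> \<beta>", OF sol uniq])
  thus ?thesis unfolding lax_defined_def using ex by simp
qed




lemma row_B:
  fixes a x y R f g :: "nat \<Rightarrow> complex"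
  assumes dist: "distinct [a p, a q, a r]" "distinct [a m, a u, a v]"
    and y0: "y p = 0" "y q = 0" "y r = 0" and xn: "x p \<noteq> 0" "x q \<noteq> 0" "x r \<noteq> 0"
    and x0: "x u = 0" "x v = 0" and yn: "y u \<noteq> 0" "y v \<noteq> 0" "y m \<noteq> 0"
  shows "(\<forall>s\<in>{p,q,r,m,u,v}. ev g (a s) * y s + ev f (a s) * x s = R s) \<longleftrightarrow>
         (\<forall>k\<le>2. f k = FA a x R p q r k) \<and> (\<forall>k\<le>2. g k = GA a x y R p q r m u v k)"
  using row_A[OF assms, of f g R] by (simp add: add.commute)

definition SolB where
  "SolB a b \<kappa> \<alpha> \<beta> p q r m u v k i j =
     (if k \<le> 2 \<and> i \<in> {1,2} then
        (if j = 2 then FA a (\<alpha> 2) (Rv a b \<kappa> \<alpha> \<beta> i) p q r k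
         else if j = 1 then GA a (\<alpha> 2) (\<alpha> 1) (Rv a b \<kappa> \<alpha> \<beta> i) p q r m u v k else 0)
      else 0)"

lemma structB:
  fixes a b \<kappa> :: "nat \<Rightarrow> complex" and \<alpha> \<beta> :: "nat \<Rightarrow> nat \<Rightarrow> complex"
  assumes S: "{p,q,r,m,u,v} = {1..6::nat}"
    and dist: "distinct [a p, a q, a r]" "distinct [a m, a u, a v]"
    and y0: "\<alpha> 1 p = 0" "\<alpha> 1 q = 0" "\<alpha> 1 r = 0" and xn: "\<alpha> 2 p \<noteq> 0" "\<alpha> 2 q \<noteq> 0" "\<alpha> 2 r \<noteq> 0"
    and x0: "\<alpha> 2 u = 0" "\<alpha> 2 v = 0" and yn: "\<alpha> 1 u \<noteq> 0" "\<alpha> 1 v \<noteq> 0" "\<alpha> 1 m \<noteq> 0"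
  shows "lax_defined a b \<kappa> \<alpha> \<beta> \<and> lax_A a b \<kappa> \<alpha> \<beta> = SolB a b \<kappa> \<alpha> \<beta> p q r m u v"
proof -
  note rowB = row_B[of a p q r m u v "\<alpha> 1" "\<alpha> 2", OF dist y0 xn x0 yn]
  have iff: "lax_eqs a b \<kappa> \<alpha> \<beta> Am \<longleftrightarrow>
      (\<forall>k i j. (k > 2 \<or> i \<notin> {1,2} \<or> j \<notin> {1,2}) \<longrightarrow> Am k i j = 0) \<and>
      (\<forall>i\<in>{1,2::nat}. (\<forall>k\<le>2. Am k i 2 = FA a (\<alpha> 2) (Rv a b \<kappa> \<alpha> \<beta> i) p q r k) \<and>
          (\<forall>k\<le>2. Am k i 1 = GA a (\<alpha> 2) (\<alpha> 1) (Rv a b \<kappa> \<alpha> \<beta> i) p q r m u v k))" for Am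
  proof -
    have sw: "(\<forall>s\<in>{1..6}. \<forall>i\<in>{1,2::nat}. ev (\<lambda>k. Am k i 1) (a s) * \<alpha> 1 s + ev (\<lambda>k. Am k i 2) (a s) * \<alpha> 2 s
       = Rv a b \<kappa> \<alpha> \<beta> i s) \<longleftrightarrow> (\<forall>i\<in>{1,2::nat}. \<forall>s\<in>{p,q,r,m,u,v}. ev (\<lambda>k. Am k i 1) (a s) * \<alpha> 1 s + ev (\<lambda>k. Am k i 2) (a s) * \<alpha> 2 s
       = Rv a b \<kappa> \<alpha> \<beta> i s)" unfolding S by blast
    have rw: "(\<forall>s\<in>{p,q,r,m,u,v}. ev (\<lambda>k. Am k i 1) (a s) * \<alpha> 1 s + ev (\<lambda>k. Am k i 2) (a s) * \<alpha> 2 s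
       = Rv a b \<kappa> \<alpha> \<beta> i s) \<longleftrightarrow> (\<forall>k\<le>2. Am k i 2 = FA a (\<alpha> 2) (Rv a b \<kappa> \<alpha> \<beta> i) p q r k) \<and>
          (\<forall>k\<le>2. Am k i 1 = GA a (\<alpha> 2) (\<alpha> 1) (Rv a b \<kappa> \<alpha> \<beta> i) p q r m u v k)" for i
      by (rule rowB)
    show ?thesis unfolding lax_eqs_iff sw rw ..
  qed
  let ?A = "SolB a b \<kappa> \<alpha> \<beta> p q r m u v"
  have sol: "lax_eqs a b \<kappa> \<alpha> \<beta> ?A" unfolding iff by (auto simp: SolB_def)
  have uniq: "Am = ?A" if "lax_eqs a b \<kappa> \<alpha> \<beta> Am" for Am
  proof (intro ext)
    fix k i j
    show "Am k i j = ?A k i j"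
      using that unfolding iff by (cases "k > 2 \<or> i \<notin> {1,2} \<or> j \<notin> {1,2}") (auto simp: SolB_def)
  qed
  have ex: "\<exists>!Am. lax_eqs a b \<kappa> \<alpha> \<beta> Am" using sol uniq by blast
  have "lax_A a b \<kappa> \<alpha> \<beta> = ?A" unfolding lax_A_def by (rule the_equality[where P="lax_eqs a b \<kappa> \<alpha> \<beta>", OF sol uniq])
  thus ?thesis unfolding lax_defined_def using ex by simp
qed

lemma sumz: "(\<forall>s\<in>{1..6}. \<alpha> i s * \<beta> j s = 0) \<Longrightarrow>
   (\<Sum>s\<in>{1..6::nat}. fls_const (\<alpha> i s * \<beta> j s) * Y s * X s) = (0 :: complex fls)"
  by (intro sum.neutral) auto

lemma sumc: "(\<forall>k\<le>2. A k = c k) \<Longrightarrow> (\<Sum>k\<le>2. fls_const (A k) * xz ^ k) = (\<Sum>k\<le>2. fls_const (c k) * xz ^ k)"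
  by (intro sum.cong) auto

lemma Ham_diag:
  assumes c1: "\<forall>k\<le>2. lax_A a b \<kappa> \<alpha> \<beta> k 1 1 = c1 k" and c2: "\<forall>k\<le>2. lax_A a b \<kappa> \<alpha> \<beta> k 2 2 = c2 k"
    and tri: "((\<forall>k\<le>2. lax_A a b \<kappa> \<alpha> \<beta> k 1 2 = 0) \<and> (\<forall>s\<in>{1..6}. \<alpha> 1 s * \<beta> 2 s = 0)) \<or>
              ((\<forall>k\<le>2. lax_A a b \<kappa> \<alpha> \<beta> k 2 1 = 0) \<and> (\<forall>s\<in>{1..6}. \<alpha> 2 s * \<beta> 1 s = 0))"
    and d1: "\<forall>s\<in>{1..6}. \<alpha> 1 s * \<beta> 1 s = 0" and d2: "\<forall>s\<in>{1..6}. \<alpha> 2 s * \<beta> 2 s = 0"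
  shows "Ham p4 p5 p6 p7 a b \<kappa> \<alpha> \<beta> = (2 * c1 0 * c1 2 + c1 1 ^ 2) + (2 * c2 0 * c2 2 + c2 1 ^ 2)"
proof -
  let ?L = "Lz p4 p5 p6 p7 a b \<kappa> \<alpha> \<beta>"
  have L11: "?L 1 1 = Spol c1" unfolding Lz_def Spol_def sumz[of \<alpha> 1 \<beta> 1, OF d1] sumc[OF c1] by simp
  have L22: "?L 2 2 = Spol c2" unfolding Lz_def Spol_def sumz[of \<alpha> 2 \<beta> 2, OF d2] sumc[OF c2] by simp
  have off: "?L 1 2 * ?L 2 1 = 0"
  proof (cases "(\<forall>k\<le>2. lax_A a b \<kappa> \<alpha> \<beta> k 1 2 = 0) \<and> (\<forall>s\<in>{1..6}. \<alpha> 1 s * \<beta> 2 s = 0)")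
    case True
    hence "?L 1 2 = 0" unfolding Lz_def using sumz[of \<alpha> 1 \<beta> 2] sumc[of "\<lambda>k. lax_A a b \<kappa> \<alpha> \<beta> k 1 2" "\<lambda>k. 0"] by simp
    thus ?thesis by simp
  next
    case False
    hence "(\<forall>k\<le>2. lax_A a b \<kappa> \<alpha> \<beta> k 2 1 = 0) \<and> (\<forall>s\<in>{1..6}. \<alpha> 2 s * \<beta> 1 s = 0)" using tri by blast
    hence "?L 2 1 = 0" unfolding Lz_def using sumz[of \<alpha> 2 \<beta> 1] sumc[of "\<lambda>k. lax_A a b \<kappa> \<alpha> \<beta> k 2 1" "\<lambda>k. 0"] by simp
    thus ?thesis by simp
  qed
  have tr: "(\<Sum>i\<in>{1,2::nat}. \<Sum>j\<in>{1,2::nat}. ?L i j * ?L j i) = Spol c1 * Spol c1 + Spol c2 * Spol c2"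
    using off L11 L22 by (simp add: mult.commute)
  show ?thesis unfolding Ham_def tr distrib_left fls_residue_add res_Spol ..
qed




lemma ball16: "(\<forall>r\<in>{1..6::nat}. P r) \<longleftrightarrow> P 1 \<and> P 2 \<and> P 3 \<and> P 4 \<and> P 5 \<and> P 6"
proof
  assume "\<forall>r\<in>{1..6::nat}. P r" thus "P 1 \<and> P 2 \<and> P 3 \<and> P 4 \<and> P 5 \<and> P 6" by auto
next
  assume H: "P 1 \<and> P 2 \<and> P 3 \<and> P 4 \<and> P 5 \<and> P 6"
  show "\<forall>r\<in>{1..6::nat}. P r"
  proof
    fix r :: nat assume "r \<in> {1..6}"
    hence "r = 1 \<or> r = 2 \<or> r = 3 \<or> r = 4 \<or> r = 5 \<or> r = 6" by auto
    thus "P r" using H by auto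
  qed
qed

lemma Sg_zero: "(\<forall>r\<in>{1..6}. \<alpha> i r * \<beta> j r = 0) \<Longrightarrow> Sg a b \<alpha> \<beta> i j s = 0"
  unfolding Sg_def by (intro sum.neutral) auto

lemma Rv_simple:
  "(\<alpha> 1 s = 0 \<or> (\<forall>r\<in>{1..6}. \<alpha> i r * \<beta> 1 r = 0)) \<Longrightarrow> (\<alpha> 2 s = 0 \<or> (\<forall>r\<in>{1..6}. \<alpha> i r * \<beta> 2 r = 0))
   \<Longrightarrow> Rv a b \<kappa> \<alpha> \<beta> i s = \<kappa> s * \<alpha> i s"
  unfolding Rv_def by (auto simp: Sg_zero)

lemma FA_cong: "x p \<noteq> 0 \<Longrightarrow> x q \<noteq> 0 \<Longrightarrow> x r \<noteq> 0 \<Longrightarrow> R p = w p * x p \<Longrightarrow> R q = w q * x q \<Longrightarrow> R r = w r * x r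
  \<Longrightarrow> FA a x R p q r = interp (a p) (a q) (a r) (w p) (w q) (w r)"
  unfolding FA_def by simp

lemma ev_zero: "ev (\<lambda>k. 0) x = 0" by (simp add: ev_def)

lemma HamA:
  assumes S: "{2,4,5,m,u,6} = {1..6::nat}"
    and dist: "distinct [a 2, a 4, a 5]" "distinct [a m, a u, a 6]"
    and y0: "\<alpha> 2 2 = 0" "\<alpha> 2 4 = 0" "\<alpha> 2 5 = 0" and xn: "\<alpha> 1 2 \<noteq> 0" "\<alpha> 1 4 \<noteq> 0" "\<alpha> 1 5 \<noteq> 0"
    and x0: "\<alpha> 1 u = 0" "\<alpha> 1 6 = 0" and yn: "\<alpha> 2 u \<noteq> 0" "\<alpha> 2 6 \<noteq> 0" "\<alpha> 2 m \<noteq> 0"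
    and R1: "Rv a b \<kappa> \<alpha> \<beta> 1 2 = \<kappa> 2 * \<alpha> 1 2" "Rv a b \<kappa> \<alpha> \<beta> 1 4 = \<kappa> 4 * \<alpha> 1 4" "Rv a b \<kappa> \<alpha> \<beta> 1 5 = \<kappa> 5 * \<alpha> 1 5"
    and R2: "Rv a b \<kappa> \<alpha> \<beta> 2 m = \<kappa> m * \<alpha> 2 m" "Rv a b \<kappa> \<alpha> \<beta> 2 u = \<kappa> u * \<alpha> 2 u" "Rv a b \<kappa> \<alpha> \<beta> 2 6 = \<kappa> 6 * \<alpha> 2 6"
    and mc: "\<alpha> 1 m = 0 \<or> (Rv a b \<kappa> \<alpha> \<beta> 2 2 = 0 \<and> Rv a b \<kappa> \<alpha> \<beta> 2 4 = 0 \<and> Rv a b \<kappa> \<alpha> \<beta> 2 5 = 0)"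
    and tri: "(Rv a b \<kappa> \<alpha> \<beta> 2 2 = 0 \<and> Rv a b \<kappa> \<alpha> \<beta> 2 4 = 0 \<and> Rv a b \<kappa> \<alpha> \<beta> 2 5 = 0 \<and> (\<forall>s\<in>{1..6}. \<alpha> 2 s * \<beta> 1 s = 0))
       \<or> (Rv a b \<kappa> \<alpha> \<beta> 1 m = 0 \<and> \<alpha> 1 m = 0 \<and> Rv a b \<kappa> \<alpha> \<beta> 1 u = 0 \<and> Rv a b \<kappa> \<alpha> \<beta> 1 6 = 0 \<and> (\<forall>s\<in>{1..6}. \<alpha> 1 s * \<beta> 2 s = 0))"
    and d1: "\<forall>s\<in>{1..6}. \<alpha> 1 s * \<beta> 1 s = 0" and d2: "\<forall>s\<in>{1..6}. \<alpha> 2 s * \<beta> 2 s = 0"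
  shows "Ham p4 p5 p6 p7 a b \<kappa> \<alpha> \<beta> = Gfun (a 2) (a 4) (a 5) (\<kappa> 2) (\<kappa> 4) (\<kappa> 5) + Gfun (a m) (a u) (a 6) (\<kappa> m) (\<kappa> u) (\<kappa> 6)"
proof -
  have st: "lax_A a b \<kappa> \<alpha> \<beta> = SolA a b \<kappa> \<alpha> \<beta> 2 4 5 m u 6"
    using structA[OF S dist y0 xn x0 yn] by blast
  let ?P1 = "interp (a 2) (a 4) (a 5) (\<kappa> 2) (\<kappa> 4) (\<kappa> 5)"
  let ?P2 = "interp (a m) (a u) (a 6) (\<kappa> m) (\<kappa> u) (\<kappa> 6)"
  have F1: "FA a (\<alpha> 1) (Rv a b \<kappa> \<alpha> \<beta> 1) 2 4 5 = ?P1"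
    by (rule FA_cong) (use xn R1 in \<open>simp_all add: mult.commute\<close>)
  have G2: "GA a (\<alpha> 1) (\<alpha> 2) (Rv a b \<kappa> \<alpha> \<beta> 2) 2 4 5 m u 6 = ?P2"
  proof -
    have "(Rv a b \<kappa> \<alpha> \<beta> 2 m - ev (FA a (\<alpha> 1) (Rv a b \<kappa> \<alpha> \<beta> 2) 2 4 5) (a m) * \<alpha> 1 m) / \<alpha> 2 m = \<kappa> m"
    proof (cases "\<alpha> 1 m = 0")
      case True thus ?thesis using R2 yn by simp
    next
      case False
      hence "FA a (\<alpha> 1) (Rv a b \<kappa> \<alpha> \<beta> 2) 2 4 5 = interp (a 2) (a 4) (a 5) 0 0 0"
        using mc by (intro FA_cong) (use xn in simp_all)
      thus ?thesis using R2 yn by (simp add: interp_zero ev_zero)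
    qed
    thus ?thesis unfolding GA_def using R2 yn by simp
  qed
  have c1: "\<forall>k\<le>2. lax_A a b \<kappa> \<alpha> \<beta> k 1 1 = ?P1 k" unfolding st SolA_def F1 by simp
  have c2: "\<forall>k\<le>2. lax_A a b \<kappa> \<alpha> \<beta> k 2 2 = ?P2 k" unfolding st SolA_def G2 by simp
  have tri': "((\<forall>k\<le>2. lax_A a b \<kappa> \<alpha> \<beta> k 1 2 = 0) \<and> (\<forall>s\<in>{1..6}. \<alpha> 1 s * \<beta> 2 s = 0)) \<or>
              ((\<forall>k\<le>2. lax_A a b \<kappa> \<alpha> \<beta> k 2 1 = 0) \<and> (\<forall>s\<in>{1..6}. \<alpha> 2 s * \<beta> 1 s = 0))"
  proof (cases "Rv a b \<kappa> \<alpha> \<beta> 2 2 = 0 \<and> Rv a b \<kappa> \<alpha> \<beta> 2 4 = 0 \<and> Rv a b \<kappa> \<alpha> \<beta> 2 5 = 0 \<and> (\<forall>s\<in>{1..6}. \<alpha> 2 s * \<beta> 1 s = 0)")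
    case True
    hence "FA a (\<alpha> 1) (Rv a b \<kappa> \<alpha> \<beta> 2) 2 4 5 = interp (a 2) (a 4) (a 5) 0 0 0"
      by (intro FA_cong) (use xn in simp_all)
    hence "\<forall>k\<le>2. lax_A a b \<kappa> \<alpha> \<beta> k 2 1 = 0" unfolding st SolA_def by (simp add: interp_zero)
    thus ?thesis using True by blast
  next
    case False
    hence T: "Rv a b \<kappa> \<alpha> \<beta> 1 m = 0 \<and> \<alpha> 1 m = 0 \<and> Rv a b \<kappa> \<alpha> \<beta> 1 u = 0 \<and> Rv a b \<kappa> \<alpha> \<beta> 1 6 = 0 \<and> (\<forall>s\<in>{1..6}. \<alpha> 1 s * \<beta> 2 s = 0)"
      using tri by blast
    hence "GA a (\<alpha> 1) (\<alpha> 2) (Rv a b \<kappa> \<alpha> \<beta> 1) 2 4 5 m u 6 = interp (a m) (a u) (a 6) 0 0 0"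
      unfolding GA_def by simp
    hence "\<forall>k\<le>2. lax_A a b \<kappa> \<alpha> \<beta> k 1 2 = 0" unfolding st SolA_def by (simp add: interp_zero)
    thus ?thesis using T by blast
  qed
  have dA: "a 2 \<noteq> a 4" "a 2 \<noteq> a 5" "a 4 \<noteq> a 5" "a m \<noteq> a u" "a m \<noteq> a 6" "a u \<noteq> a 6" using dist by auto
  show ?thesis unfolding Ham_diag[OF c1 c2 tri' d1 d2] interp_G[OF dA(1-3)] interp_G[OF dA(4-6)] ..
qed


lemma HamB:
  assumes S: "{1,3,6,m,u,5} = {1..6::nat}"
    and dist: "distinct [a 1, a 3, a 6]" "distinct [a m, a u, a 5]"
    and y0: "\<alpha> 1 1 = 0" "\<alpha> 1 3 = 0" "\<alpha> 1 6 = 0" and xn: "\<alpha> 2 1 \<noteq> 0" "\<alpha> 2 3 \<noteq> 0" "\<alpha> 2 6 \<noteq> 0"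
    and x0: "\<alpha> 2 u = 0" "\<alpha> 2 5 = 0" and yn: "\<alpha> 1 u \<noteq> 0" "\<alpha> 1 5 \<noteq> 0" "\<alpha> 1 m \<noteq> 0"
    and R2: "Rv a b \<kappa> \<alpha> \<beta> 2 1 = \<kappa> 1 * \<alpha> 2 1" "Rv a b \<kappa> \<alpha> \<beta> 2 3 = \<kappa> 3 * \<alpha> 2 3" "Rv a b \<kappa> \<alpha> \<beta> 2 6 = \<kappa> 6 * \<alpha> 2 6"
    and R1: "Rv a b \<kappa> \<alpha> \<beta> 1 m = \<kappa> m * \<alpha> 1 m" "Rv a b \<kappa> \<alpha> \<beta> 1 u = \<kappa> u * \<alpha> 1 u" "Rv a b \<kappa> \<alpha> \<beta> 1 5 = \<kappa> 5 * \<alpha> 1 5"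
    and R1z: "Rv a b \<kappa> \<alpha> \<beta> 1 1 = 0" "Rv a b \<kappa> \<alpha> \<beta> 1 3 = 0" "Rv a b \<kappa> \<alpha> \<beta> 1 6 = 0"
    and off: "\<forall>s\<in>{1..6}. \<alpha> 1 s * \<beta> 2 s = 0"
    and d1: "\<forall>s\<in>{1..6}. \<alpha> 1 s * \<beta> 1 s = 0" and d2: "\<forall>s\<in>{1..6}. \<alpha> 2 s * \<beta> 2 s = 0"
  shows "Ham p4 p5 p6 p7 a b \<kappa> \<alpha> \<beta> = Gfun (a m) (a u) (a 5) (\<kappa> m) (\<kappa> u) (\<kappa> 5) + Gfun (a 1) (a 3) (a 6) (\<kappa> 1) (\<kappa> 3) (\<kappa> 6)"
proof -
  have st: "lax_A a b \<kappa> \<alpha> \<beta> = SolB a b \<kappa> \<alpha> \<beta> 1 3 6 m u 5"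
    using structB[OF S dist y0 xn x0 yn] by blast
  let ?P1 = "interp (a m) (a u) (a 5) (\<kappa> m) (\<kappa> u) (\<kappa> 5)"
  let ?P2 = "interp (a 1) (a 3) (a 6) (\<kappa> 1) (\<kappa> 3) (\<kappa> 6)"
  have F2: "FA a (\<alpha> 2) (Rv a b \<kappa> \<alpha> \<beta> 2) 1 3 6 = ?P2"
    by (rule FA_cong) (use xn R2 in \<open>simp_all add: mult.commute\<close>)
  have F1: "FA a (\<alpha> 2) (Rv a b \<kappa> \<alpha> \<beta> 1) 1 3 6 = interp (a 1) (a 3) (a 6) 0 0 0"
    by (intro FA_cong) (use xn R1z in simp_all)
  have G1: "GA a (\<alpha> 2) (\<alpha> 1) (Rv a b \<kappa> \<alpha> \<beta> 1) 1 3 6 m u 5 = ?P1"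
    unfolding GA_def F1 interp_zero ev_zero using R1 yn by simp
  have c1: "\<forall>k\<le>2. lax_A a b \<kappa> \<alpha> \<beta> k 1 1 = ?P1 k" unfolding st SolB_def G1 by simp
  have c2: "\<forall>k\<le>2. lax_A a b \<kappa> \<alpha> \<beta> k 2 2 = ?P2 k" unfolding st SolB_def F2 by simp
  have "\<forall>k\<le>2. lax_A a b \<kappa> \<alpha> \<beta> k 1 2 = 0" unfolding st SolB_def F1 interp_zero by simp
  hence tri': "((\<forall>k\<le>2. lax_A a b \<kappa> \<alpha> \<beta> k 1 2 = 0) \<and> (\<forall>s\<in>{1..6}. \<alpha> 1 s * \<beta> 2 s = 0)) \<or>
              ((\<forall>k\<le>2. lax_A a b \<kappa> \<alpha> \<beta> k 2 1 = 0) \<and> (\<forall>s\<in>{1..6}. \<alpha> 2 s * \<beta> 1 s = 0))" using off by blast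
  have dA: "a m \<noteq> a u" "a m \<noteq> a 5" "a u \<noteq> a 5" "a 1 \<noteq> a 3" "a 1 \<noteq> a 6" "a 3 \<noteq> a 6" using dist by auto
  show ?thesis unfolding Ham_diag[OF c1 c2 tri' d1 d2] interp_G[OF dA(1-3)] interp_G[OF dA(4-6)] ..
qed

lemma ev_add_if: "ev (\<lambda>k. c k + (if P then d k else 0)) x = ev c x + (if P then ev d x else 0)"
  by (cases P) (simp_all add: ev_def sum.distrib distrib_right)

lemma not_defined:
  assumes def: "lax_defined a b \<kappa> \<alpha> \<beta>" and i0: "i0 \<in> {1,2::nat}" and j0: "j0 \<in> {1,2::nat}"
    and root: "\<forall>s\<in>{1..6}. ev d (a s) * \<alpha> j0 s = 0" and d2: "d 2 \<noteq> 0" and dz: "\<forall>k>2. d k = 0"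
  shows False
proof -
  obtain Am where Am: "lax_eqs a b \<kappa> \<alpha> \<beta> Am" and un: "\<And>B. lax_eqs a b \<kappa> \<alpha> \<beta> B \<Longrightarrow> B = Am"
    using def unfolding lax_defined_def by blast
  define Am' where "Am' k i j = Am k i j + (if i = i0 \<and> j = j0 then d k else 0)" for k i j
  have z: "\<forall>k i j. (k > 2 \<or> i \<notin> {1,2} \<or> j \<notin> {1,2}) \<longrightarrow> Am k i j = 0"
   and e: "\<forall>s\<in>{1..6}. \<forall>i\<in>{1,2::nat}. ev (\<lambda>k. Am k i 1) (a s) * \<alpha> 1 s + ev (\<lambda>k. Am k i 2) (a s) * \<alpha> 2 s
       = Rv a b \<kappa> \<alpha> \<beta> i s" using Am unfolding lax_eqs_iff by blast+
  have "lax_eqs a b \<kappa> \<alpha> \<beta> Am'"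
    unfolding lax_eqs_iff
  proof (intro conjI allI impI ballI)
    fix k i j :: nat assume "k > 2 \<or> i \<notin> {1,2} \<or> j \<notin> {1,2}"
    thus "Am' k i j = 0" using z dz i0 j0 unfolding Am'_def by auto
  next
    fix s i assume s: "s \<in> {1..6::nat}" and i: "i \<in> {1,2::nat}"
    have r: "ev d (a s) * \<alpha> j0 s = 0" using root s by blast
    show "ev (\<lambda>k. Am' k i 1) (a s) * \<alpha> 1 s + ev (\<lambda>k. Am' k i 2) (a s) * \<alpha> 2 s = Rv a b \<kappa> \<alpha> \<beta> i s"
    proof -
      have ei: "ev (\<lambda>k. Am k i 1) (a s) * \<alpha> 1 s + ev (\<lambda>k. Am k i 2) (a s) * \<alpha> 2 s = Rv a b \<kappa> \<alpha> \<beta> i s"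
        using e s i by blast
      show ?thesis unfolding Am'_def ev_add_if using ei r j0 by (auto simp: distrib_right)
    qed
  qed
  hence "Am' = Am" by (rule un)
  hence "Am' 2 i0 j0 = Am 2 i0 j0" by simp
  thus False using d2 unfolding Am'_def by simp
qed

definition dq :: "complex \<Rightarrow> complex \<Rightarrow> nat \<Rightarrow> complex" where
  "dq u v k = (if k = 0 then u * v else if k = 1 then - (u + v) else if k = 2 then 1 else 0)"

lemma ev_dq: "ev (dq u v) x = (x - u) * (x - v)"
  by (simp add: ev_expand dq_def power2_eq_square algebra_simps)

lemma dq_props: "dq u v 2 \<noteq> 0" "\<forall>k>2. dq u v k = 0" by (auto simp: dq_def)




lemma S16: "{1..6::nat} = {1,2,3,4,5,6}" "{Suc 0..6::nat} = {1,2,3,4,5,6}" by auto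

lemma ball16': "(\<forall>r\<in>{Suc 0..6::nat}. P r) \<longleftrightarrow> P 1 \<and> P 2 \<and> P 3 \<and> P 4 \<and> P 5 \<and> P 6"
  using ball16[of P] by simp

lemma Gfun_swap: "u1 \<noteq> u2 \<Longrightarrow> u1 \<noteq> u3 \<Longrightarrow> u2 \<noteq> u3 \<Longrightarrow> Gfun u1 u2 u3 k1 k2 k3 = Gfun u2 u1 u3 k2 k1 k3"
proof -
  assume h: "u1 \<noteq> u2" "u1 \<noteq> u3" "u2 \<noteq> u3"
  have h': "u2 \<noteq> u1" using h by simp
  have "Gfun u1 u2 u3 k1 k2 k3 = 2 * interp u1 u2 u3 k1 k2 k3 0 * interp u1 u2 u3 k1 k2 k3 2 + (interp u1 u2 u3 k1 k2 k3 1)^2"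
    by (rule interp_G[OF h, symmetric])
  also have "\<dots> = 2 * interp u2 u1 u3 k2 k1 k3 0 * interp u2 u1 u3 k2 k1 k3 2 + (interp u2 u1 u3 k2 k1 k3 1)^2"
    by (simp only: interp_swap12[of u1 u2 u3 k1 k2 k3])
  also have "\<dots> = Gfun u2 u1 u3 k2 k1 k3" by (rule interp_G[OF h' h(3) h(2)])
  finally show ?thesis .
qed

lemma deriv0: assumes "open S" "x \<in> S" "\<forall>t\<in>S. f t = c" shows "(f has_field_derivative 0) (at x)"
proof -
  have "((\<lambda>_. c) has_field_derivative 0) (at x)" by (rule DERIV_const)
  thus ?thesis by (rule has_field_derivative_transform_within_open[OF _ assms(1,2)]) (use assms(3) in simp)
qed

lemma Rv_b0: "(\<forall>r\<in>{1..6}. \<beta> 1 r = 0 \<and> \<beta> 2 r = 0) \<Longrightarrow> Rv a b \<kappa> \<alpha> \<beta> i s = \<kappa> s * \<alpha> i s"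
proof -
  assume h: "\<forall>r\<in>{1..6}. \<beta> 1 r = 0 \<and> \<beta> 2 r = 0"
  have h1: "\<forall>r\<in>{1..6}. \<alpha> i r * \<beta> 1 r = 0" using h by simp
  have h2: "\<forall>r\<in>{1..6}. \<alpha> i r * \<beta> 2 r = 0" using h by simp
  show ?thesis using h1 h2 by (intro Rv_simple) simp_all
qed

context
  fixes p4 p5 p6 p7 :: complex
    and a b \<kappa> :: "nat \<Rightarrow> complex"
    and \<alpha> \<beta> :: "nat \<Rightarrow> nat \<Rightarrow> complex"
  assumes da: "distinct [a 1, a 2, a 3, a 4, a 5, a 6]"
    and gauge: "\<alpha> 1 5 = 1" "\<alpha> 2 5 = 0" "\<alpha> 1 6 = 0" "\<alpha> 2 6 = 1"
    and Z_alpha: "\<alpha> 1 1 = 0" "\<alpha> 2 2 = 0" "\<alpha> 1 3 = 0" "\<alpha> 2 4 = 0"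
    and bz: "\<beta> 1 1 = 0" "\<beta> 1 2 = 0" "\<beta> 1 3 = 0" "\<beta> 1 4 = 0" "\<beta> 1 5 = 0" "\<beta> 1 6 = 0"
            "\<beta> 2 1 = 0" "\<beta> 2 2 = 0" "\<beta> 2 3 = 0" "\<beta> 2 4 = 0" "\<beta> 2 5 = 0" "\<beta> 2 6 = 0"
    and nz: "\<alpha> 2 1 \<noteq> 0" "\<alpha> 1 2 \<noteq> 0" "\<alpha> 2 3 \<noteq> 0" "\<alpha> 1 4 \<noteq> 0"
begin


lemma b0: "\<forall>r\<in>{1..6}. \<beta> 1 r = 0 \<and> \<beta> 2 r = 0" using bz by (simp add: ball16 ball16')

lemmas Rv0 = Rv_b0[OF b0]

lemma setA13: "{2,4,5,1,3,6::nat} = {1..6}" by auto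
lemma setA31: "{2,4,5,3,1,6::nat} = {1..6}" by auto
lemma setB24: "{1,3,6,2,4,5::nat} = {1..6}" by auto
lemma setB42: "{1,3,6,4,2,5::nat} = {1..6}" by auto

lemma cBase: shows "Ham p4 p5 p6 p7 a b \<kappa> (\<alpha>) (\<beta>) = Gfun (a 2) (a 4) (a 5) (\<kappa> 2) (\<kappa> 4) (\<kappa> 5) + Gfun (a 1) (a 3) (a 6) (\<kappa> 1) (\<kappa> 3) (\<kappa> 6)"
  apply (rule HamA[where m=1 and u=3])
  apply (rule setA13)
  using da apply auto[1]
  using da apply auto[1]
  apply (simp_all add: gauge Z_alpha nz bz gauge[unfolded One_nat_def] Z_alpha[unfolded One_nat_def] nz[unfolded One_nat_def] bz[unfolded One_nat_def]  Rv0 ball16 ball16')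
  done

lemma cA11: shows "Ham p4 p5 p6 p7 a b \<kappa> (\<alpha>(1 := (\<alpha> 1)(1 := t))) (\<beta>) = Gfun (a 2) (a 4) (a 5) (\<kappa> 2) (\<kappa> 4) (\<kappa> 5) + Gfun (a 1) (a 3) (a 6) (\<kappa> 1) (\<kappa> 3) (\<kappa> 6)"
  apply (rule HamA[where m=1 and u=3])
  apply (rule setA13)
  using da apply auto[1]
  using da apply auto[1]
  apply (simp_all add: gauge Z_alpha nz bz gauge[unfolded One_nat_def] Z_alpha[unfolded One_nat_def] nz[unfolded One_nat_def] bz[unfolded One_nat_def]  Rv0 ball16 ball16')
  done

lemma cA21: assumes "t \<noteq> 0" shows "Ham p4 p5 p6 p7 a b \<kappa> (\<alpha>(2 := (\<alpha> 2)(1 := t))) (\<beta>) = Gfun (a 2) (a 4) (a 5) (\<kappa> 2) (\<kappa> 4) (\<kappa> 5) + Gfun (a 1) (a 3) (a 6) (\<kappa> 1) (\<kappa> 3) (\<kappa> 6)"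
  apply (rule HamA[where m=1 and u=3])
  apply (rule setA13)
  using da apply auto[1]
  using da apply auto[1]
  apply (simp_all add: gauge Z_alpha nz bz gauge[unfolded One_nat_def] Z_alpha[unfolded One_nat_def] nz[unfolded One_nat_def] bz[unfolded One_nat_def] assms Rv0 ball16 ball16')
  done

lemma cA13: shows "Ham p4 p5 p6 p7 a b \<kappa> (\<alpha>(1 := (\<alpha> 1)(3 := t))) (\<beta>) = Gfun (a 2) (a 4) (a 5) (\<kappa> 2) (\<kappa> 4) (\<kappa> 5) + Gfun (a 3) (a 1) (a 6) (\<kappa> 3) (\<kappa> 1) (\<kappa> 6)"
  apply (rule HamA[where m=3 and u=1])
  apply (rule setA31)
  using da apply auto[1]
  using da apply auto[1]
  apply (simp_all add: gauge Z_alpha nz bz gauge[unfolded One_nat_def] Z_alpha[unfolded One_nat_def] nz[unfolded One_nat_def] bz[unfolded One_nat_def]  Rv0 ball16 ball16')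
  done

lemma cA23: assumes "t \<noteq> 0" shows "Ham p4 p5 p6 p7 a b \<kappa> (\<alpha>(2 := (\<alpha> 2)(3 := t))) (\<beta>) = Gfun (a 2) (a 4) (a 5) (\<kappa> 2) (\<kappa> 4) (\<kappa> 5) + Gfun (a 1) (a 3) (a 6) (\<kappa> 1) (\<kappa> 3) (\<kappa> 6)"
  apply (rule HamA[where m=1 and u=3])
  apply (rule setA13)
  using da apply auto[1]
  using da apply auto[1]
  apply (simp_all add: gauge Z_alpha nz bz gauge[unfolded One_nat_def] Z_alpha[unfolded One_nat_def] nz[unfolded One_nat_def] bz[unfolded One_nat_def] assms Rv0 ball16 ball16')
  done

lemma cB12: assumes "t \<noteq> 0" shows "Ham p4 p5 p6 p7 a b \<kappa> (\<alpha>(1 := (\<alpha> 1)(2 := t))) \<beta> = Gfun (a 2) (a 4) (a 5) (\<kappa> 2) (\<kappa> 4) (\<kappa> 5) + Gfun (a 1) (a 3) (a 6) (\<kappa> 1) (\<kappa> 3) (\<kappa> 6)"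
  apply (rule HamB[where m=2 and u=4])
  apply (rule setB24)
  using da apply auto[1]
  using da apply auto[1]
  apply (simp_all add: gauge Z_alpha nz bz gauge[unfolded One_nat_def] Z_alpha[unfolded One_nat_def] nz[unfolded One_nat_def] bz[unfolded One_nat_def] assms Rv0 ball16 ball16')
  done

lemma cB22: shows "Ham p4 p5 p6 p7 a b \<kappa> (\<alpha>(2 := (\<alpha> 2)(2 := t))) \<beta> = Gfun (a 2) (a 4) (a 5) (\<kappa> 2) (\<kappa> 4) (\<kappa> 5) + Gfun (a 1) (a 3) (a 6) (\<kappa> 1) (\<kappa> 3) (\<kappa> 6)"
  apply (rule HamB[where m=2 and u=4])
  apply (rule setB24)
  using da apply auto[1]
  using da apply auto[1]
  apply (simp_all add: gauge Z_alpha nz bz gauge[unfolded One_nat_def] Z_alpha[unfolded One_nat_def] nz[unfolded One_nat_def] bz[unfolded One_nat_def]  Rv0 ball16 ball16')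
  done

lemma cB14: assumes "t \<noteq> 0" shows "Ham p4 p5 p6 p7 a b \<kappa> (\<alpha>(1 := (\<alpha> 1)(4 := t))) \<beta> = Gfun (a 2) (a 4) (a 5) (\<kappa> 2) (\<kappa> 4) (\<kappa> 5) + Gfun (a 1) (a 3) (a 6) (\<kappa> 1) (\<kappa> 3) (\<kappa> 6)"
  apply (rule HamB[where m=2 and u=4])
  apply (rule setB24)
  using da apply auto[1]
  using da apply auto[1]
  apply (simp_all add: gauge Z_alpha nz bz gauge[unfolded One_nat_def] Z_alpha[unfolded One_nat_def] nz[unfolded One_nat_def] bz[unfolded One_nat_def] assms Rv0 ball16 ball16')
  done

lemma cB24: shows "Ham p4 p5 p6 p7 a b \<kappa> (\<alpha>(2 := (\<alpha> 2)(4 := t))) \<beta> = Gfun (a 4) (a 2) (a 5) (\<kappa> 4) (\<kappa> 2) (\<kappa> 5) + Gfun (a 1) (a 3) (a 6) (\<kappa> 1) (\<kappa> 3) (\<kappa> 6)"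
  apply (rule HamB[where m=4 and u=2])
  apply (rule setB42)
  using da apply auto[1]
  using da apply auto[1]
  apply (simp_all add: gauge Z_alpha nz bz gauge[unfolded One_nat_def] Z_alpha[unfolded One_nat_def] nz[unfolded One_nat_def] bz[unfolded One_nat_def]  Rv0 ball16 ball16')
  done

lemma cb11: shows "Ham p4 p5 p6 p7 a b \<kappa> (\<alpha>) (\<beta>(1 := (\<beta> 1)(1 := t))) = Gfun (a 2) (a 4) (a 5) (\<kappa> 2) (\<kappa> 4) (\<kappa> 5) + Gfun (a 1) (a 3) (a 6) (\<kappa> 1) (\<kappa> 3) (\<kappa> 6)"
  apply (rule HamA[where m=1 and u=3])
  apply (rule setA13)
  using da apply auto[1]
  using da apply auto[1]
  apply (simp_all add: gauge Z_alpha nz bz gauge[unfolded One_nat_def] Z_alpha[unfolded One_nat_def] nz[unfolded One_nat_def] bz[unfolded One_nat_def]  Rv_simple ball16 ball16')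
  done

lemma cb22: shows "Ham p4 p5 p6 p7 a b \<kappa> (\<alpha>) (\<beta>(2 := (\<beta> 2)(2 := t))) = Gfun (a 2) (a 4) (a 5) (\<kappa> 2) (\<kappa> 4) (\<kappa> 5) + Gfun (a 1) (a 3) (a 6) (\<kappa> 1) (\<kappa> 3) (\<kappa> 6)"
  apply (rule HamA[where m=1 and u=3])
  apply (rule setA13)
  using da apply auto[1]
  using da apply auto[1]
  apply (simp_all add: gauge Z_alpha nz bz gauge[unfolded One_nat_def] Z_alpha[unfolded One_nat_def] nz[unfolded One_nat_def] bz[unfolded One_nat_def]  Rv_simple ball16 ball16')
  done

lemma cb13: shows "Ham p4 p5 p6 p7 a b \<kappa> (\<alpha>) (\<beta>(1 := (\<beta> 1)(3 := t))) = Gfun (a 2) (a 4) (a 5) (\<kappa> 2) (\<kappa> 4) (\<kappa> 5) + Gfun (a 1) (a 3) (a 6) (\<kappa> 1) (\<kappa> 3) (\<kappa> 6)"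
  apply (rule HamA[where m=1 and u=3])
  apply (rule setA13)
  using da apply auto[1]
  using da apply auto[1]
  apply (simp_all add: gauge Z_alpha nz bz gauge[unfolded One_nat_def] Z_alpha[unfolded One_nat_def] nz[unfolded One_nat_def] bz[unfolded One_nat_def]  Rv_simple ball16 ball16')
  done

lemma cb24: shows "Ham p4 p5 p6 p7 a b \<kappa> (\<alpha>) (\<beta>(2 := (\<beta> 2)(4 := t))) = Gfun (a 2) (a 4) (a 5) (\<kappa> 2) (\<kappa> 4) (\<kappa> 5) + Gfun (a 1) (a 3) (a 6) (\<kappa> 1) (\<kappa> 3) (\<kappa> 6)"
  apply (rule HamA[where m=1 and u=3])
  apply (rule setA13)
  using da apply auto[1]
  using da apply auto[1]
  apply (simp_all add: gauge Z_alpha nz bz gauge[unfolded One_nat_def] Z_alpha[unfolded One_nat_def] nz[unfolded One_nat_def] bz[unfolded One_nat_def]  Rv_simple ball16 ball16')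
  done

end

lemma ball14: "(\<forall>j\<in>{1..4::nat}. P j) \<longleftrightarrow> P 1 \<and> P 2 \<and> P 3 \<and> P 4"
proof
  assume "\<forall>j\<in>{1..4::nat}. P j" thus "P 1 \<and> P 2 \<and> P 3 \<and> P 4" by auto
next
  assume H: "P 1 \<and> P 2 \<and> P 3 \<and> P 4"
  show "\<forall>j\<in>{1..4::nat}. P j"
  proof
    fix j :: nat assume "j \<in> {1..4}"
    hence "j = 1 \<or> j = 2 \<or> j = 3 \<or> j = 4" by auto
    thus "P j" using H by auto
  qed
qed

lemma open_nz: "open (- {0::complex})" by (intro open_Compl closed_singleton)

theorem mainTheorem8:
  fixes p4 p5 p6 p7 :: complex
    and a b \<kappa> :: "nat \<Rightarrow> complex"
    and \<alpha> \<beta> :: "nat \<Rightarrow> nat \<Rightarrow> complex"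
  assumes distinct: "\<forall>s\<in>{1..6}. \<forall>r\<in>{1..6}. s \<noteq> r \<longrightarrow> a s \<noteq> a r"
    and on_curve: "\<forall>s\<in>{1..6}. (b s)^2 = curveP p4 p5 p6 p7 (a s)"
    and gauge: "\<alpha> 1 5 = 1" "\<alpha> 2 5 = 0" "\<alpha> 1 6 = 0" "\<alpha> 2 6 = 1"
               "\<beta> 1 5 = 0" "\<beta> 2 6 = 0"
    and Z_alpha: "\<alpha> 1 1 = 0" "\<alpha> 2 2 = 0" "\<alpha> 1 3 = 0" "\<alpha> 2 4 = 0"
    and Z_beta: "\<forall>i\<in>{1,2}. \<forall>j\<in>{1..4}. \<beta> i j = 0" "\<beta> 2 5 = 0" "\<beta> 1 6 = 0"
    and defined: "lax_defined a b \<kappa> \<alpha> \<beta>"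
  shows "(\<forall>i\<in>{1,2}. \<forall>j\<in>{1..4}.
            ((\<lambda>t. Ham p4 p5 p6 p7 a b \<kappa> (\<alpha>(i := (\<alpha> i)(j := t))) \<beta>)
               has_field_derivative 0) (at (\<alpha> i j)))
       \<and> (\<forall>(i,j)\<in>{(1,1),(2,2),(1,3),(2,4)}.
            ((\<lambda>t. Ham p4 p5 p6 p7 a b \<kappa> \<alpha> (\<beta>(i := (\<beta> i)(j := t))))
               has_field_derivative 0) (at (\<beta> i j)))
       \<and> Ham p4 p5 p6 p7 a b \<kappa> \<alpha> \<beta>
           = Gfun (a 1) (a 3) (a 6) (\<kappa> 1) (\<kappa> 3) (\<kappa> 6)
             + Gfun (a 2) (a 4) (a 5) (\<kappa> 2) (\<kappa> 4) (\<kappa> 5)"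

proof -
  have da: "distinct [a 1, a 2, a 3, a 4, a 5, a 6]" using distinct by (simp add: ball16 ball16')
  have b14: "\<forall>j\<in>{1..4}. \<beta> 1 j = 0" "\<forall>j\<in>{1..4}. \<beta> 2 j = 0" using Z_beta(1) by simp_all
  have bz: "\<beta> 1 1 = 0" "\<beta> 1 2 = 0" "\<beta> 1 3 = 0" "\<beta> 1 4 = 0" "\<beta> 1 5 = 0" "\<beta> 1 6 = 0"
            "\<beta> 2 1 = 0" "\<beta> 2 2 = 0" "\<beta> 2 3 = 0" "\<beta> 2 4 = 0" "\<beta> 2 5 = 0" "\<beta> 2 6 = 0"
    using b14 gauge Z_beta(2,3) by (simp_all add: ball14)
  have n21: "\<alpha> 2 1 \<noteq> 0"
  proof
    assume h: "\<alpha> 2 1 = 0"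
    show False
    proof (rule not_defined[OF defined, of 1 2 "dq (a 3) (a 6)"])
      show "\<forall>s\<in>{1..6}. ev (dq (a 3) (a 6)) (a s) * \<alpha> 2 s = 0" using h gauge Z_alpha by (simp add: ball16 ball16' ev_dq)
    qed (simp_all add: dq_props)
  qed
  have n23: "\<alpha> 2 3 \<noteq> 0"
  proof
    assume h: "\<alpha> 2 3 = 0"
    show False
    proof (rule not_defined[OF defined, of 1 2 "dq (a 1) (a 6)"])
      show "\<forall>s\<in>{1..6}. ev (dq (a 1) (a 6)) (a s) * \<alpha> 2 s = 0" using h gauge Z_alpha by (simp add: ball16 ball16' ev_dq)
    qed (simp_all add: dq_props)
  qed
  have n12: "\<alpha> 1 2 \<noteq> 0"
  proof
    assume h: "\<alpha> 1 2 = 0"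
    show False
    proof (rule not_defined[OF defined, of 1 1 "dq (a 4) (a 5)"])
      show "\<forall>s\<in>{1..6}. ev (dq (a 4) (a 5)) (a s) * \<alpha> 1 s = 0" using h gauge Z_alpha by (simp add: ball16 ball16' ev_dq)
    qed (simp_all add: dq_props)
  qed
  have n14: "\<alpha> 1 4 \<noteq> 0"
  proof
    assume h: "\<alpha> 1 4 = 0"
    show False
    proof (rule not_defined[OF defined, of 1 1 "dq (a 2) (a 5)"])
      show "\<forall>s\<in>{1..6}. ev (dq (a 2) (a 5)) (a s) * \<alpha> 1 s = 0" using h gauge Z_alpha by (simp add: ball16 ball16' ev_dq)
    qed (simp_all add: dq_props)
  qed
  note nz = n21 n12 n23 n14
  note H = da gauge(1-4) Z_alpha bz nz
  have d11: "((\<lambda>t. Ham p4 p5 p6 p7 a b \<kappa> (\<alpha>(1 := (\<alpha> 1)(1 := t))) \<beta>) has_field_derivative 0) (at (\<alpha> 1 1))"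
  proof (rule deriv0[where c="Gfun (a 2) (a 4) (a 5) (\<kappa> 2) (\<kappa> 4) (\<kappa> 5) + Gfun (a 1) (a 3) (a 6) (\<kappa> 1) (\<kappa> 3) (\<kappa> 6)", OF open_UNIV UNIV_I])
    show "\<forall>t\<in>UNIV. Ham p4 p5 p6 p7 a b \<kappa> (\<alpha>(1 := (\<alpha> 1)(1 := t))) \<beta> = Gfun (a 2) (a 4) (a 5) (\<kappa> 2) (\<kappa> 4) (\<kappa> 5) + Gfun (a 1) (a 3) (a 6) (\<kappa> 1) (\<kappa> 3) (\<kappa> 6)" using cA11[OF H] by simp
  qed
  have d21: "((\<lambda>t. Ham p4 p5 p6 p7 a b \<kappa> (\<alpha>(2 := (\<alpha> 2)(1 := t))) \<beta>) has_field_derivative 0) (at (\<alpha> 2 1))"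
  proof (rule deriv0[where c="Gfun (a 2) (a 4) (a 5) (\<kappa> 2) (\<kappa> 4) (\<kappa> 5) + Gfun (a 1) (a 3) (a 6) (\<kappa> 1) (\<kappa> 3) (\<kappa> 6)", OF open_nz])
    show "\<alpha> 2 1 \<in> - {0}" using n21 by simp
    show "\<forall>t\<in>- {0}. Ham p4 p5 p6 p7 a b \<kappa> (\<alpha>(2 := (\<alpha> 2)(1 := t))) \<beta> = Gfun (a 2) (a 4) (a 5) (\<kappa> 2) (\<kappa> 4) (\<kappa> 5) + Gfun (a 1) (a 3) (a 6) (\<kappa> 1) (\<kappa> 3) (\<kappa> 6)" using cA21[OF H] by simp
  qed
  have d13: "((\<lambda>t. Ham p4 p5 p6 p7 a b \<kappa> (\<alpha>(1 := (\<alpha> 1)(3 := t))) \<beta>) has_field_derivative 0) (at (\<alpha> 1 3))"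
  proof (rule deriv0[where c="Gfun (a 2) (a 4) (a 5) (\<kappa> 2) (\<kappa> 4) (\<kappa> 5) + Gfun (a 3) (a 1) (a 6) (\<kappa> 3) (\<kappa> 1) (\<kappa> 6)", OF open_UNIV UNIV_I])
    show "\<forall>t\<in>UNIV. Ham p4 p5 p6 p7 a b \<kappa> (\<alpha>(1 := (\<alpha> 1)(3 := t))) \<beta> = Gfun (a 2) (a 4) (a 5) (\<kappa> 2) (\<kappa> 4) (\<kappa> 5) + Gfun (a 3) (a 1) (a 6) (\<kappa> 3) (\<kappa> 1) (\<kappa> 6)" using cA13[OF H] by simp
  qed
  have d23: "((\<lambda>t. Ham p4 p5 p6 p7 a b \<kappa> (\<alpha>(2 := (\<alpha> 2)(3 := t))) \<beta>) has_field_derivative 0) (at (\<alpha> 2 3))"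
  proof (rule deriv0[where c="Gfun (a 2) (a 4) (a 5) (\<kappa> 2) (\<kappa> 4) (\<kappa> 5) + Gfun (a 1) (a 3) (a 6) (\<kappa> 1) (\<kappa> 3) (\<kappa> 6)", OF open_nz])
    show "\<alpha> 2 3 \<in> - {0}" using n23 by simp
    show "\<forall>t\<in>- {0}. Ham p4 p5 p6 p7 a b \<kappa> (\<alpha>(2 := (\<alpha> 2)(3 := t))) \<beta> = Gfun (a 2) (a 4) (a 5) (\<kappa> 2) (\<kappa> 4) (\<kappa> 5) + Gfun (a 1) (a 3) (a 6) (\<kappa> 1) (\<kappa> 3) (\<kappa> 6)" using cA23[OF H] by simp
  qed
  have d12: "((\<lambda>t. Ham p4 p5 p6 p7 a b \<kappa> (\<alpha>(1 := (\<alpha> 1)(2 := t))) \<beta>) has_field_derivative 0) (at (\<alpha> 1 2))"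
  proof (rule deriv0[where c="Gfun (a 2) (a 4) (a 5) (\<kappa> 2) (\<kappa> 4) (\<kappa> 5) + Gfun (a 1) (a 3) (a 6) (\<kappa> 1) (\<kappa> 3) (\<kappa> 6)", OF open_nz])
    show "\<alpha> 1 2 \<in> - {0}" using n12 by simp
    show "\<forall>t\<in>- {0}. Ham p4 p5 p6 p7 a b \<kappa> (\<alpha>(1 := (\<alpha> 1)(2 := t))) \<beta> = Gfun (a 2) (a 4) (a 5) (\<kappa> 2) (\<kappa> 4) (\<kappa> 5) + Gfun (a 1) (a 3) (a 6) (\<kappa> 1) (\<kappa> 3) (\<kappa> 6)" using cB12[OF H] by simp
  qed
  have d22: "((\<lambda>t. Ham p4 p5 p6 p7 a b \<kappa> (\<alpha>(2 := (\<alpha> 2)(2 := t))) \<beta>) has_field_derivative 0) (at (\<alpha> 2 2))"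
  proof (rule deriv0[where c="Gfun (a 2) (a 4) (a 5) (\<kappa> 2) (\<kappa> 4) (\<kappa> 5) + Gfun (a 1) (a 3) (a 6) (\<kappa> 1) (\<kappa> 3) (\<kappa> 6)", OF open_UNIV UNIV_I])
    show "\<forall>t\<in>UNIV. Ham p4 p5 p6 p7 a b \<kappa> (\<alpha>(2 := (\<alpha> 2)(2 := t))) \<beta> = Gfun (a 2) (a 4) (a 5) (\<kappa> 2) (\<kappa> 4) (\<kappa> 5) + Gfun (a 1) (a 3) (a 6) (\<kappa> 1) (\<kappa> 3) (\<kappa> 6)" using cB22[OF H] by simp
  qed
  have d14: "((\<lambda>t. Ham p4 p5 p6 p7 a b \<kappa> (\<alpha>(1 := (\<alpha> 1)(4 := t))) \<beta>) has_field_derivative 0) (at (\<alpha> 1 4))"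
  proof (rule deriv0[where c="Gfun (a 2) (a 4) (a 5) (\<kappa> 2) (\<kappa> 4) (\<kappa> 5) + Gfun (a 1) (a 3) (a 6) (\<kappa> 1) (\<kappa> 3) (\<kappa> 6)", OF open_nz])
    show "\<alpha> 1 4 \<in> - {0}" using n14 by simp
    show "\<forall>t\<in>- {0}. Ham p4 p5 p6 p7 a b \<kappa> (\<alpha>(1 := (\<alpha> 1)(4 := t))) \<beta> = Gfun (a 2) (a 4) (a 5) (\<kappa> 2) (\<kappa> 4) (\<kappa> 5) + Gfun (a 1) (a 3) (a 6) (\<kappa> 1) (\<kappa> 3) (\<kappa> 6)" using cB14[OF H] by simp
  qed
  have d24: "((\<lambda>t. Ham p4 p5 p6 p7 a b \<kappa> (\<alpha>(2 := (\<alpha> 2)(4 := t))) \<beta>) has_field_derivative 0) (at (\<alpha> 2 4))"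
  proof (rule deriv0[where c="Gfun (a 4) (a 2) (a 5) (\<kappa> 4) (\<kappa> 2) (\<kappa> 5) + Gfun (a 1) (a 3) (a 6) (\<kappa> 1) (\<kappa> 3) (\<kappa> 6)", OF open_UNIV UNIV_I])
    show "\<forall>t\<in>UNIV. Ham p4 p5 p6 p7 a b \<kappa> (\<alpha>(2 := (\<alpha> 2)(4 := t))) \<beta> = Gfun (a 4) (a 2) (a 5) (\<kappa> 4) (\<kappa> 2) (\<kappa> 5) + Gfun (a 1) (a 3) (a 6) (\<kappa> 1) (\<kappa> 3) (\<kappa> 6)" using cB24[OF H] by simp
  qed
  have e11: "((\<lambda>t. Ham p4 p5 p6 p7 a b \<kappa> \<alpha> (\<beta>(1 := (\<beta> 1)(1 := t)))) has_field_derivative 0) (at (\<beta> 1 1))"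
  proof (rule deriv0[where c="Gfun (a 2) (a 4) (a 5) (\<kappa> 2) (\<kappa> 4) (\<kappa> 5) + Gfun (a 1) (a 3) (a 6) (\<kappa> 1) (\<kappa> 3) (\<kappa> 6)", OF open_UNIV UNIV_I])
    show "\<forall>t\<in>UNIV. Ham p4 p5 p6 p7 a b \<kappa> \<alpha> (\<beta>(1 := (\<beta> 1)(1 := t))) = Gfun (a 2) (a 4) (a 5) (\<kappa> 2) (\<kappa> 4) (\<kappa> 5) + Gfun (a 1) (a 3) (a 6) (\<kappa> 1) (\<kappa> 3) (\<kappa> 6)" using cb11[OF H] by simp
  qed
  have e22: "((\<lambda>t. Ham p4 p5 p6 p7 a b \<kappa> \<alpha> (\<beta>(2 := (\<beta> 2)(2 := t)))) has_field_derivative 0) (at (\<beta> 2 2))"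
  proof (rule deriv0[where c="Gfun (a 2) (a 4) (a 5) (\<kappa> 2) (\<kappa> 4) (\<kappa> 5) + Gfun (a 1) (a 3) (a 6) (\<kappa> 1) (\<kappa> 3) (\<kappa> 6)", OF open_UNIV UNIV_I])
    show "\<forall>t\<in>UNIV. Ham p4 p5 p6 p7 a b \<kappa> \<alpha> (\<beta>(2 := (\<beta> 2)(2 := t))) = Gfun (a 2) (a 4) (a 5) (\<kappa> 2) (\<kappa> 4) (\<kappa> 5) + Gfun (a 1) (a 3) (a 6) (\<kappa> 1) (\<kappa> 3) (\<kappa> 6)" using cb22[OF H] by simp
  qed
  have e13: "((\<lambda>t. Ham p4 p5 p6 p7 a b \<kappa> \<alpha> (\<beta>(1 := (\<beta> 1)(3 := t)))) has_field_derivative 0) (at (\<beta> 1 3))"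
  proof (rule deriv0[where c="Gfun (a 2) (a 4) (a 5) (\<kappa> 2) (\<kappa> 4) (\<kappa> 5) + Gfun (a 1) (a 3) (a 6) (\<kappa> 1) (\<kappa> 3) (\<kappa> 6)", OF open_UNIV UNIV_I])
    show "\<forall>t\<in>UNIV. Ham p4 p5 p6 p7 a b \<kappa> \<alpha> (\<beta>(1 := (\<beta> 1)(3 := t))) = Gfun (a 2) (a 4) (a 5) (\<kappa> 2) (\<kappa> 4) (\<kappa> 5) + Gfun (a 1) (a 3) (a 6) (\<kappa> 1) (\<kappa> 3) (\<kappa> 6)" using cb13[OF H] by simp
  qed
  have e24: "((\<lambda>t. Ham p4 p5 p6 p7 a b \<kappa> \<alpha> (\<beta>(2 := (\<beta> 2)(4 := t)))) has_field_derivative 0) (at (\<beta> 2 4))"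
  proof (rule deriv0[where c="Gfun (a 2) (a 4) (a 5) (\<kappa> 2) (\<kappa> 4) (\<kappa> 5) + Gfun (a 1) (a 3) (a 6) (\<kappa> 1) (\<kappa> 3) (\<kappa> 6)", OF open_UNIV UNIV_I])
    show "\<forall>t\<in>UNIV. Ham p4 p5 p6 p7 a b \<kappa> \<alpha> (\<beta>(2 := (\<beta> 2)(4 := t))) = Gfun (a 2) (a 4) (a 5) (\<kappa> 2) (\<kappa> 4) (\<kappa> 5) + Gfun (a 1) (a 3) (a 6) (\<kappa> 1) (\<kappa> 3) (\<kappa> 6)" using cb24[OF H] by simp
  qed
  have C1: "\<forall>i\<in>{1,2}. \<forall>j\<in>{1..4}.
            ((\<lambda>t. Ham p4 p5 p6 p7 a b \<kappa> (\<alpha>(i := (\<alpha> i)(j := t))) \<beta>)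
               has_field_derivative 0) (at (\<alpha> i j))"
  proof (intro ballI)
    fix i j :: nat assume i: "i \<in> {1,2}" and j: "j \<in> {1..4}"
    have "j = 1 \<or> j = 2 \<or> j = 3 \<or> j = 4" using j by auto
    thus "((\<lambda>t. Ham p4 p5 p6 p7 a b \<kappa> (\<alpha>(i := (\<alpha> i)(j := t))) \<beta>) has_field_derivative 0) (at (\<alpha> i j))"
      using i d11 d21 d13 d23 d12 d22 d14 d24 by auto
  qed
  have C2: "\<forall>(i,j)\<in>{(1,1),(2,2),(1,3),(2,4)}.
            ((\<lambda>t. Ham p4 p5 p6 p7 a b \<kappa> \<alpha> (\<beta>(i := (\<beta> i)(j := t))))
               has_field_derivative 0) (at (\<beta> i j))"
    using e11 e22 e13 e24 by simp
  have C3: "Ham p4 p5 p6 p7 a b \<kappa> \<alpha> \<beta>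
           = Gfun (a 1) (a 3) (a 6) (\<kappa> 1) (\<kappa> 3) (\<kappa> 6)
             + Gfun (a 2) (a 4) (a 5) (\<kappa> 2) (\<kappa> 4) (\<kappa> 5)"
    using cBase[OF H] by (simp add: add.commute)
  show ?thesis using C1 C2 C3 by blast
qed


end
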